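(* Let $k$ be a field, $V$ a $k$-vector space, $N\geq 2$, $R\subseteq V^{\otimes N}$ a subspace, $A=T(V)/(R)$, and $M$ an $A$-bimodule. Let $M^{\ast}=\mathrm{Hom}_k(M,k)$ with $A$-bimodule structure $(a.u.a')(m)=u(a'ma)$. For $p\ge 0$ define $\eta_p:\mathrm{Hom}_k(M\otimes W_{\nu(p)},k)\to \mathrm{Hom}_k(W_{\nu(p)},M^{\ast})$ by $\eta_p(\varphi)(x_1\dots x_{\nu(p)})(m)=\varphi(m\otimes x_1\dots x_{\nu(p)})$. Then $\eta=\bigoplus_p\eta_p$ is an isomorphism of cochain complexes from $C=\big(\bigoplus_p (M\otimes W_{\nu(p)})^{\ast}, b_K^{\ast}\big)$, where $b_K^{\ast}(\phi)=-(-1)^p\phi\circ b_K$ for $\phi\in(M\otimes W_{\nu(p)})^\ast$, to the Koszul cochain complex $(\mathrm{Hom}_k(W_{\nu(\bullet)},M^{\ast}),b_K)$, and it induces a graded linear isomorphism $H(\eta):H^{\bullet}(C)\to \mathrm{HK}^{\bullet}(A,M^{\ast})$ which is natural in the $A$-bimodule $M$.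
   Context: $k$ field, $V$ a $k$-vector space, $N\ge 2$, $R\subseteq V^{\otimes N}$, $A=T(V)/(R)$. $W_0=k$, $W_p=V^{\otimes p}$ for $1\le p\le N-1$, $W_p=\bigcap_{i+N+j=p}V^{\otimes i}\otimes R\otimes V^{\otimes j}$ for $p\ge N$; $\nu(2p')=Np'$, $\nu(2p'+1)=Np'+1$. Elements of $W_p$ are written $x_1\dots x_p$ (a sum of such tensors, $x_i\in V$, acting on bimodules via their images in $A$). Koszul chain differential on $M\otimes W_{\nu(q)}$: for $q=2q'+1$, $b_K(m\otimes x_1\dots x_{Nq'+1})=mx_1\otimes x_2\dots x_{Nq'+1}-x_{Nq'+1}m\otimes x_1\dots x_{Nq'}$; for $q=2q'\ge2$, $b_K(m\otimes x_1\dots x_{Nq'})=\sum_{i=0}^{N-1}x_{i+Nq'-N+2}\dots x_{Nq'}mx_1\dots x_i\otimes x_{i+1}\dots x_{i+Nq'-N+1}$. Koszul cochain differential on $\mathrm{Hom}_k(W_{\nu(p)},P)$ for a bimodule $P$: for $p=2p'$, $b_K(f)(x_1\dots x_{Np'+1})=f(x_1\dots x_{Np'})x_{Np'+1}-x_1f(x_2\dots x_{Np'+1})$; for $p=2p'+1$, $b_K(f)(x_1\dots x_{N(p'+1)})=\sum_{i=0}^{N-1}x_1\dots x_if(x_{i+1}\dots x_{i+Np'+1})x_{i+Np'+2}\dots x_{N(p'+1)}$. Its cohomology is $\mathrm{HK}^\bullet(A,P)$. *)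

theory Defs
  imports Complex_Main "HOL-Library.Function_Algebras"
begin

text \<open>The vector space V is the free k-vector space
on a (basis) type 'x; an element of the tensor power V^(tensor n) is a finitely supported
function from words (lists over 'x) of length n to 'k, the basis word x1...xn corresponding
to the list [x1,...,xn].  Likewise an element of M tensor V^(tensor n) is a finitely supported
function from words of length n to M.  Linear maps defined on a subspace S are represented
by functions that vanish outside S.\<close>

definition fsupp :: "('a \<Rightarrow> 'b::zero) \<Rightarrow> 'a set" where
  "fsupp f = {u. f u \<noteq> 0}"

definition Tn :: "nat \<Rightarrow> ('x list \<Rightarrow> 'b::zero) set" where
  "Tn n = {f. finite (fsupp f) \<and> (\<forall>u\<in>fsupp f. length u = n)}"

definition sc :: "'k::times \<Rightarrow> ('a \<Rightarrow> 'k) \<Rightarrow> 'a \<Rightarrow> 'k" where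
  "sc c f = (\<lambda>u. c * f u)"

definition tprod :: "('x list \<Rightarrow> 'k::comm_ring_1) \<Rightarrow> ('x list \<Rightarrow> 'k) \<Rightarrow> 'x list \<Rightarrow> 'k" where
  "tprod f g = (\<lambda>u. \<Sum>i\<le>length u. f (take i u) * g (drop i u))"

definition tsubspace :: "nat \<Rightarrow> ('x list \<Rightarrow> 'k::field) set \<Rightarrow> bool" where
  "tsubspace N R \<longleftrightarrow> R \<subseteq> Tn N \<and> module.subspace sc R"

definition Wsp :: "nat \<Rightarrow> ('x list \<Rightarrow> 'k::field) set \<Rightarrow> nat \<Rightarrow> ('x list \<Rightarrow> 'k) set" where
  "Wsp N R p = (if p < N then Tn p else
     (\<Inter>i\<in>{0..p - N}. module.span sc
        {tprod (tprod f r) g | f r g. f \<in> Tn i \<and> r \<in> R \<and> g \<in> Tn (p - N - i)}))"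

definition nu :: "nat \<Rightarrow> nat \<Rightarrow> nat" where
  "nu N q = (if even q then N * (q div 2) else N * (q div 2) + 1)"

definition lin_on :: "('k \<Rightarrow> 'a::plus \<Rightarrow> 'a) \<Rightarrow> ('k \<Rightarrow> 'b::plus \<Rightarrow> 'b) \<Rightarrow> 'a set \<Rightarrow> ('a \<Rightarrow> 'b) \<Rightarrow> bool" where
  "lin_on s1 s2 S f \<longleftrightarrow> (\<forall>x\<in>S. \<forall>y\<in>S. f (x + y) = f x + f y) \<and> (\<forall>c. \<forall>x\<in>S. f (s1 c x) = s2 c (f x))"

definition lword :: "('x \<Rightarrow> 'm \<Rightarrow> 'm) \<Rightarrow> 'x list \<Rightarrow> 'm \<Rightarrow> 'm" where
  "lword lact u m = foldr lact u m"

definition rword :: "('x \<Rightarrow> 'm \<Rightarrow> 'm) \<Rightarrow> 'x list \<Rightarrow> 'm \<Rightarrow> 'm" where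
  "rword ract u m = fold ract u m"

text \<open>An A-bimodule, A = T(V)/(R): a k-vector space with commuting k-linear left and right
actions of the generators (i.e. a T(V)-bimodule) on which R acts by zero on both sides
(equivalently the ideal (R) acts by zero).\<close>
definition bimod :: "nat \<Rightarrow> ('x list \<Rightarrow> 'k::field) set \<Rightarrow> ('k \<Rightarrow> 'm::ab_group_add \<Rightarrow> 'm)
     \<Rightarrow> ('x \<Rightarrow> 'm \<Rightarrow> 'm) \<Rightarrow> ('x \<Rightarrow> 'm \<Rightarrow> 'm) \<Rightarrow> bool" where
  "bimod N R smult lact ract \<longleftrightarrow> vector_space smult
     \<and> (\<forall>x. lin_on smult smult UNIV (lact x) \<and> lin_on smult smult UNIV (ract x))
     \<and> (\<forall>x y m. lact x (ract y m) = ract y (lact x m))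
     \<and> (\<forall>r\<in>R. \<forall>m. (\<Sum>u\<in>fsupp r. smult (r u) (lword lact u m)) = 0
                 \<and> (\<Sum>u\<in>fsupp r. smult (r u) (rword ract u m)) = 0)"

definition bimod_hom :: "('k \<Rightarrow> 'm \<Rightarrow> 'm) \<Rightarrow> ('x \<Rightarrow> 'm \<Rightarrow> 'm) \<Rightarrow> ('x \<Rightarrow> 'm \<Rightarrow> 'm)
     \<Rightarrow> ('k \<Rightarrow> 'n::plus \<Rightarrow> 'n) \<Rightarrow> ('x \<Rightarrow> 'n \<Rightarrow> 'n) \<Rightarrow> ('x \<Rightarrow> 'n \<Rightarrow> 'n) \<Rightarrow> ('m::plus \<Rightarrow> 'n) \<Rightarrow> bool" where
  "bimod_hom s1 l1 r1 s2 l2 r2 g \<longleftrightarrow> lin_on s1 s2 UNIV g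
     \<and> (\<forall>x m. g (l1 x m) = l2 x (g m) \<and> g (r1 x m) = r2 x (g m))"

definition mt :: "('k \<Rightarrow> 'm \<Rightarrow> 'm) \<Rightarrow> 'm \<Rightarrow> ('x list \<Rightarrow> 'k) \<Rightarrow> 'x list \<Rightarrow> 'm" where
  "mt smult m w = (\<lambda>u. smult (w u) m)"

definition msc :: "('k \<Rightarrow> 'm \<Rightarrow> 'm) \<Rightarrow> 'k \<Rightarrow> ('x list \<Rightarrow> 'm) \<Rightarrow> 'x list \<Rightarrow> 'm" where
  "msc smult c t = (\<lambda>u. smult c (t u))"

definition MW :: "nat \<Rightarrow> ('x list \<Rightarrow> 'k::field) set \<Rightarrow> ('k \<Rightarrow> 'm::ab_group_add \<Rightarrow> 'm) \<Rightarrow> nat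
     \<Rightarrow> ('x list \<Rightarrow> 'm) set" where
  "MW N R smult p = module.span (msc smult) {mt smult m w | m w. w \<in> Wsp N R p}"

definition single :: "'a \<Rightarrow> 'b::zero \<Rightarrow> 'a \<Rightarrow> 'b" where
  "single a b = (\<lambda>u. if u = a then b else 0)"

definition bKc_basis :: "nat \<Rightarrow> ('x \<Rightarrow> 'm::ab_group_add \<Rightarrow> 'm) \<Rightarrow> ('x \<Rightarrow> 'm \<Rightarrow> 'm) \<Rightarrow> nat
     \<Rightarrow> 'x list \<Rightarrow> 'm \<Rightarrow> 'x list \<Rightarrow> 'm" where
  "bKc_basis N lact ract q w m =
     (if odd q then single (tl w) (ract (hd w) m) - single (butlast w) (lact (last w) m)
      else (\<Sum>i<N. single (take (length w - N + 1) (drop i w))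
                (lword lact (drop (i + length w - N + 1) w) (rword ract (take i w) m))))"

definition bK_chain :: "nat \<Rightarrow> ('x \<Rightarrow> 'm::ab_group_add \<Rightarrow> 'm) \<Rightarrow> ('x \<Rightarrow> 'm \<Rightarrow> 'm) \<Rightarrow> nat
     \<Rightarrow> ('x list \<Rightarrow> 'm) \<Rightarrow> 'x list \<Rightarrow> 'm" where
  "bK_chain N lact ract q t = (\<Sum>w\<in>fsupp t. bKc_basis N lact ract q w (t w))"

definition Cdual :: "nat \<Rightarrow> ('x list \<Rightarrow> 'k::field) set \<Rightarrow> ('k \<Rightarrow> 'm::ab_group_add \<Rightarrow> 'm) \<Rightarrow> nat
     \<Rightarrow> (('x list \<Rightarrow> 'm) \<Rightarrow> 'k) set" where
  "Cdual N R smult p = {\<phi>. lin_on (msc smult) (*) (MW N R smult (nu N p)) \<phi>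
                         \<and> (\<forall>t. t \<notin> MW N R smult (nu N p) \<longrightarrow> \<phi> t = 0)}"

definition dC :: "nat \<Rightarrow> ('x list \<Rightarrow> 'k::field) set \<Rightarrow> ('k \<Rightarrow> 'm::ab_group_add \<Rightarrow> 'm)
     \<Rightarrow> ('x \<Rightarrow> 'm \<Rightarrow> 'm) \<Rightarrow> ('x \<Rightarrow> 'm \<Rightarrow> 'm) \<Rightarrow> nat \<Rightarrow> (('x list \<Rightarrow> 'm) \<Rightarrow> 'k) \<Rightarrow> ('x list \<Rightarrow> 'm) \<Rightarrow> 'k" where
  "dC N R smult lact ract p \<phi> = (\<lambda>t. if t \<in> MW N R smult (nu N (Suc p))
       then - ((-1) ^ p) * \<phi> (bK_chain N lact ract (Suc p) t) else 0)"

definition slice :: "'x list \<Rightarrow> 'x list \<Rightarrow> ('x list \<Rightarrow> 'k) \<Rightarrow> 'x list \<Rightarrow> 'k" where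
  "slice a c w = (\<lambda>u. w (a @ u @ c))"

definition bK_cochain :: "nat \<Rightarrow> ('x list \<Rightarrow> 'k::field) set \<Rightarrow> ('x \<Rightarrow> 'p::ab_group_add \<Rightarrow> 'p)
     \<Rightarrow> ('x \<Rightarrow> 'p \<Rightarrow> 'p) \<Rightarrow> nat \<Rightarrow> (('x list \<Rightarrow> 'k) \<Rightarrow> 'p) \<Rightarrow> ('x list \<Rightarrow> 'k) \<Rightarrow> 'p" where
  "bK_cochain N R lP rP p f w =
     (if w \<notin> Wsp N R (nu N (Suc p)) then 0
      else if even p then
        (\<Sum>x\<in>last ` fsupp w. rP x (f (slice [] [x] w)))
        - (\<Sum>x\<in>hd ` fsupp w. lP x (f (slice [x] [] w)))
      else (\<Sum>i<N. \<Sum>(a, c)\<in>(\<lambda>u. (take i u, drop (i + nu N p) u)) ` fsupp w.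
               lword lP a (rword rP c (f (slice a c w)))))"

text \<open>M^* = Hom_k(M,k) with (a.u.a')(m) = u(a' m a)\<close>
definition Mdual :: "('k::field \<Rightarrow> 'm \<Rightarrow> 'm) \<Rightarrow> ('m::plus \<Rightarrow> 'k) set" where
  "Mdual smult = {u. lin_on smult (*) UNIV u}"

definition dual_lact :: "('x \<Rightarrow> 'm \<Rightarrow> 'm) \<Rightarrow> 'x \<Rightarrow> ('m \<Rightarrow> 'k) \<Rightarrow> 'm \<Rightarrow> 'k" where
  "dual_lact ract x u = (\<lambda>m. u (ract x m))"

definition dual_ract :: "('x \<Rightarrow> 'm \<Rightarrow> 'm) \<Rightarrow> 'x \<Rightarrow> ('m \<Rightarrow> 'k) \<Rightarrow> 'm \<Rightarrow> 'k" where
  "dual_ract lact x u = (\<lambda>m. u (lact x m))"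

definition Kcoch :: "nat \<Rightarrow> ('x list \<Rightarrow> 'k::field) set \<Rightarrow> ('k \<Rightarrow> 'm::ab_group_add \<Rightarrow> 'm) \<Rightarrow> nat
     \<Rightarrow> (('x list \<Rightarrow> 'k) \<Rightarrow> 'm \<Rightarrow> 'k) set" where
  "Kcoch N R smult p = {f. lin_on sc (\<lambda>c u m. c * u m) (Wsp N R (nu N p)) f
        \<and> (\<forall>w\<in>Wsp N R (nu N p). f w \<in> Mdual smult)
        \<and> (\<forall>w. w \<notin> Wsp N R (nu N p) \<longrightarrow> f w = 0)}"

definition dK :: "nat \<Rightarrow> ('x list \<Rightarrow> 'k::field) set \<Rightarrow> ('x \<Rightarrow> 'm \<Rightarrow> 'm) \<Rightarrow> ('x \<Rightarrow> 'm \<Rightarrow> 'm) \<Rightarrow> nat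
     \<Rightarrow> (('x list \<Rightarrow> 'k) \<Rightarrow> 'm \<Rightarrow> 'k) \<Rightarrow> ('x list \<Rightarrow> 'k) \<Rightarrow> 'm \<Rightarrow> 'k" where
  "dK N R lact ract p f = bK_cochain N R (dual_lact ract) (dual_ract lact) p f"

definition eta :: "nat \<Rightarrow> ('x list \<Rightarrow> 'k::field) set \<Rightarrow> ('k \<Rightarrow> 'm \<Rightarrow> 'm) \<Rightarrow> nat
     \<Rightarrow> (('x list \<Rightarrow> 'm) \<Rightarrow> 'k) \<Rightarrow> ('x list \<Rightarrow> 'k) \<Rightarrow> 'm \<Rightarrow> 'k" where
  "eta N R smult p \<phi> = (\<lambda>w. if w \<in> Wsp N R (nu N p) then (\<lambda>m. \<phi> (mt smult m w)) else 0)"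

definition cocycles :: "(nat \<Rightarrow> 'a set) \<Rightarrow> (nat \<Rightarrow> 'a \<Rightarrow> 'a::zero) \<Rightarrow> nat \<Rightarrow> 'a set" where
  "cocycles X d p = {z\<in>X p. d p z = 0}"

definition coboundaries :: "(nat \<Rightarrow> 'a set) \<Rightarrow> (nat \<Rightarrow> 'a \<Rightarrow> 'a::zero) \<Rightarrow> nat \<Rightarrow> 'a set" where
  "coboundaries X d p = (if p = 0 then {0} else d (p - 1) ` X (p - 1))"

text \<open>h maps Z1 into Z2 and B1 into B2, and the induced map Z1/B1 \<rightarrow> Z2/B2 is bijective\<close>
definition induces_iso :: "'a set \<Rightarrow> 'a set \<Rightarrow> 'b set \<Rightarrow> 'b set \<Rightarrow> ('a \<Rightarrow> 'b::minus) \<Rightarrow> bool" where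
  "induces_iso Z1 B1 Z2 B2 h \<longleftrightarrow> h ` Z1 \<subseteq> Z2 \<and> h ` B1 \<subseteq> B2
     \<and> (\<forall>z\<in>Z1. h z \<in> B2 \<longrightarrow> z \<in> B1)
     \<and> (\<forall>z'\<in>Z2. \<exists>z\<in>Z1. h z - z' \<in> B2)"

text \<open>functoriality: g : M \<rightarrow> M' induces (g tensor 1)^* on C and (g^*)_* on Koszul cochains\<close>
definition pullC :: "nat \<Rightarrow> ('x list \<Rightarrow> 'k::field) set \<Rightarrow> ('k \<Rightarrow> 'm::ab_group_add \<Rightarrow> 'm) \<Rightarrow> nat
     \<Rightarrow> ('m \<Rightarrow> 'n) \<Rightarrow> (('x list \<Rightarrow> 'n) \<Rightarrow> 'k) \<Rightarrow> ('x list \<Rightarrow> 'm) \<Rightarrow> 'k" where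
  "pullC N R smult p g \<psi> = (\<lambda>t. if t \<in> MW N R smult (nu N p) then \<psi> (g \<circ> t) else 0)"

definition pushK :: "('m \<Rightarrow> 'n) \<Rightarrow> (('x list \<Rightarrow> 'k) \<Rightarrow> 'n \<Rightarrow> 'k) \<Rightarrow> ('x list \<Rightarrow> 'k) \<Rightarrow> 'm \<Rightarrow> 'k" where
  "pushK g f = (\<lambda>w. f w \<circ> g)"

end

theory Submission
  imports Defs
begin

lemma sum_app: "(sum f A) x = (\<Sum>a\<in>A. f a x)"
  by (induction A rule: infinite_finite_induct) auto

lemma vs_sc: "vector_space (sc :: 'k::field \<Rightarrow> ('a \<Rightarrow> 'k) \<Rightarrow> 'a \<Rightarrow> 'k)"
  by unfold_locales (auto simp: sc_def fun_eq_iff algebra_simps)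

lemma vs_msc: "vector_space s \<Longrightarrow> vector_space (msc s)"
  unfolding vector_space_def msc_def by (auto simp: fun_eq_iff)

interpretation T: vector_space "sc :: 'k::field \<Rightarrow> ('a \<Rightarrow> 'k) \<Rightarrow> 'a \<Rightarrow> 'k"
  by (rule vs_sc)

lemma fsupp_add: "fsupp (f + g) \<subseteq> fsupp f \<union> fsupp (g :: 'a \<Rightarrow> 'b::monoid_add)"
  by (auto simp: fsupp_def plus_fun_def)

lemma Tn_sub: "T.subspace (Tn n :: ('x list \<Rightarrow> 'k::field) set)"
  unfolding T.subspace_def Tn_def
proof (intro conjI ballI allI)
  show "0 \<in> {f::'x list \<Rightarrow> 'k. finite (fsupp f) \<and> (\<forall>u\<in>fsupp f. length u = n)}"
    by (simp add: fsupp_def)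
next
  fix x y :: "'x list \<Rightarrow> 'k"
  assume "x \<in> {f. finite (fsupp f) \<and> (\<forall>u\<in>fsupp f. length u = n)}"
    "y \<in> {f. finite (fsupp f) \<and> (\<forall>u\<in>fsupp f. length u = n)}"
  then show "x + y \<in> {f. finite (fsupp f) \<and> (\<forall>u\<in>fsupp f. length u = n)}"
    using fsupp_add[of x y] by (auto intro: finite_subset)
next
  fix c :: 'k and x :: "'x list \<Rightarrow> 'k"
  assume "x \<in> {f. finite (fsupp f) \<and> (\<forall>u\<in>fsupp f. length u = n)}"
  moreover have "fsupp (sc c x) \<subseteq> fsupp x" by (auto simp: fsupp_def sc_def)
  ultimately show "sc c x \<in> {f. finite (fsupp f) \<and> (\<forall>u\<in>fsupp f. length u = n)}"
    by (auto intro: finite_subset)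
qed

lemma TnD: "f \<in> Tn n \<Longrightarrow> f u \<noteq> 0 \<Longrightarrow> length u = n"
  by (auto simp: Tn_def fsupp_def)

lemma TnD0: "f \<in> Tn n \<Longrightarrow> length u \<noteq> n \<Longrightarrow> f u = 0"
  using TnD by blast

lemma tprod_left:
  assumes "f \<in> Tn i"
  shows "tprod f g u = (if i \<le> length u then f (take i u) * g (drop i u) else 0)"
proof -
  have eq: "\<forall>k\<in>{..length u}. f (take k u) * g (drop k u)
        = (if k = i then f (take i u) * g (drop i u) else 0)"
  proof
    fix k assume k: "k \<in> {..length u}"
    show "f (take k u) * g (drop k u) = (if k = i then f (take i u) * g (drop i u) else 0)"
    proof (cases "f (take k u) = 0")
      case False
      then have "length (take k u) = i" using TnD[OF assms] by blast
      then have "k = i" using k by auto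
      then show ?thesis by simp
    qed auto
  qed
  have "tprod f g u = (\<Sum>k\<in>{..length u}. if k = i then f (take i u) * g (drop i u) else 0)"
    unfolding tprod_def by (rule sum.cong[OF refl]) (use eq in blast)
  also have "\<dots> = (if i \<le> length u then f (take i u) * g (drop i u) else 0)"
    by (subst sum.delta) auto
  finally show ?thesis .
qed

lemma tprod_Tn:
  assumes f: "f \<in> Tn i" and g: "g \<in> Tn j"
  shows "tprod f g \<in> Tn (i + j)"
proof -
  have sub: "fsupp (tprod f g) \<subseteq> (\<lambda>(a, b). a @ b) ` (fsupp f \<times> fsupp g)"
  proof
    fix u assume "u \<in> fsupp (tprod f g)"
    then have "i \<le> length u" "f (take i u) \<noteq> 0" "g (drop i u) \<noteq> 0"
      by (auto simp: fsupp_def tprod_left[OF f] split: if_splits)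
    then show "u \<in> (\<lambda>(a, b). a @ b) ` (fsupp f \<times> fsupp g)"
      by (auto simp: fsupp_def intro!: image_eqI[of _ _ "(take i u, drop i u)"])
  qed
  have fin: "finite (fsupp (tprod f g))"
    by (rule finite_subset[OF sub]) (use f g in \<open>auto simp: Tn_def\<close>)
  have "\<forall>u\<in>fsupp (tprod f g). length u = i + j"
  proof
    fix u assume "u \<in> fsupp (tprod f g)"
    then have "i \<le> length u" "f (take i u) \<noteq> 0" "g (drop i u) \<noteq> 0"
      by (auto simp: fsupp_def tprod_left[OF f] split: if_splits)
    then show "length u = i + j" using TnD[OF g] by fastforce
  qed
  with fin show ?thesis by (simp add: Tn_def)
qed

definition Gen :: "nat \<Rightarrow> ('x list \<Rightarrow> 'k::field) set \<Rightarrow> nat \<Rightarrow> nat \<Rightarrow> ('x list \<Rightarrow> 'k) set" where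
  "Gen N R n i = {tprod (tprod f r) g | f r g. f \<in> Tn i \<and> r \<in> R \<and> g \<in> Tn (n - N - i)}"

lemma Wsp_eq: "Wsp N R n = (if n < N then Tn n else (\<Inter>i\<in>{0..n - N}. T.span (Gen N R n i)))"
  by (simp add: Wsp_def Gen_def)

lemma W_sub: "T.subspace (Wsp N R n)"
  by (auto simp: Wsp_eq Tn_sub intro!: T.subspace_Int)

lemma W_Tn:
  assumes "tsubspace N R"
  shows "Wsp N R n \<subseteq> Tn n"
proof (cases "n < N")
  case False
  have "Gen N R n 0 \<subseteq> Tn n"
  proof
    fix x assume "x \<in> Gen N R n 0"
    then obtain f r g where x: "x = tprod (tprod f r) g" "f \<in> Tn 0" "r \<in> R" "g \<in> Tn (n - N)"
      by (auto simp: Gen_def)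
    have "r \<in> Tn N" using assms x(3) by (auto simp: tsubspace_def)
    then have "x \<in> Tn (0 + N + (n - N))" unfolding x by (intro tprod_Tn x)
    then show "x \<in> Tn n" using False by simp
  qed
  then have "T.span (Gen N R n 0) \<subseteq> Tn n" by (intro T.span_minimal Tn_sub)
  then show ?thesis using False by (auto simp: Wsp_eq)
qed (simp add: Wsp_eq)

lemma slice_lin: "module_hom sc sc (slice a c :: ('x list \<Rightarrow> 'k::field) \<Rightarrow> _)"
  unfolding module_hom_iff
  using vs_sc by (auto simp: slice_def sc_def fun_eq_iff module_iff_vector_space)

lemma slice_Cons: "slice (x # a) c w = slice a c (slice [x] [] w)"
  by (simp add: slice_def)

lemma slice_snoc: "slice [] (c @ [x]) w = slice [] c (slice [] [x] w)"
  by (simp add: slice_def)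

lemma slice_nil[simp]: "slice [] [] w = w"
  by (simp add: slice_def)

lemma Ls_Tn:
  assumes "w \<in> Tn (Suc n)"
  shows "slice [x] [] w \<in> Tn n"
proof -
  have eq: "fsupp (slice [x] [] w) = Cons x -` fsupp w"
    by (auto simp: fsupp_def slice_def)
  have fin: "finite (Cons x -` fsupp w)"
    by (rule finite_vimageI) (use assms in \<open>simp_all add: Tn_def inj_on_def\<close>)
  have "\<forall>u\<in>fsupp (slice [x] [] w). length u = n"
    using assms unfolding eq Tn_def by auto
  then show ?thesis using fin eq by (simp add: Tn_def)
qed

lemma Rs_Tn:
  assumes "w \<in> Tn (Suc n)"
  shows "slice [] [x] w \<in> Tn n"
proof -
  have eq: "fsupp (slice [] [x] w) = (\<lambda>u. u @ [x]) -` fsupp w"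
    by (auto simp: fsupp_def slice_def)
  have fin: "finite ((\<lambda>u. u @ [x]) -` fsupp w)"
    by (rule finite_vimageI) (use assms in \<open>simp_all add: Tn_def inj_on_def\<close>)
  have "\<forall>u\<in>fsupp (slice [] [x] w). length u = n"
    using assms unfolding eq Tn_def by auto
  then show ?thesis using fin eq by (simp add: Tn_def)
qed

lemma Ls_tprod:
  assumes "f \<in> Tn (Suc i)"
  shows "slice [x] [] (tprod f h) = tprod (slice [x] [] f) h"
proof
  have f': "slice [x] [] f \<in> Tn i" by (rule Ls_Tn[OF assms])
  fix v
  have e: "tprod (slice [x] [] f) h v = (if i \<le> length v then slice [x] [] f (take i v) * h (drop i v) else 0)"
    by (rule tprod_left[OF f'])
  show "slice [x] [] (tprod f h) v = tprod (slice [x] [] f) h v"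
    unfolding e by (cases "i \<le> length v") (simp_all add: tprod_left[OF assms] slice_def)
qed

lemma tprod_right:
  assumes "g \<in> Tn j"
  shows "tprod f g u = (if j \<le> length u then f (take (length u - j) u) * g (drop (length u - j) u) else 0)"
proof -
  have eq: "\<forall>k\<in>{..length u}. f (take k u) * g (drop k u)
        = (if k = length u - j then f (take (length u - j) u) * g (drop (length u - j) u) else 0)"
  proof
    fix k assume k: "k \<in> {..length u}"
    show "f (take k u) * g (drop k u) = (if k = length u - j then f (take (length u - j) u) * g (drop (length u - j) u) else 0)"
    proof (cases "g (drop k u) = 0")
      case False
      then have "length (drop k u) = j" using TnD[OF assms] by blast
      then have "k = length u - j" using k by auto
      then show ?thesis by simp
    qed auto
  qed
  have "tprod f g u = (\<Sum>k\<in>{..length u}. if k = length u - j then f (take (length u - j) u) * g (drop (length u - j) u) else 0)"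
    unfolding tprod_def by (rule sum.cong[OF refl]) (use eq in blast)
  also have "\<dots> = (if j \<le> length u then f (take (length u - j) u) * g (drop (length u - j) u) else 0)"
  proof (cases "j \<le> length u")
    case False
    have "\<forall>k\<in>{..length u}. (if k = length u - j then f (take (length u - j) u) * g (drop (length u - j) u) else 0) = 0"
    proof
      fix k assume "k \<in> {..length u}"
      show "(if k = length u - j then f (take (length u - j) u) * g (drop (length u - j) u) else 0) = 0"
        using False TnD0[OF assms, of "drop (length u - j) u"] by auto
    qed
    then show ?thesis using False by simp
  qed (subst sum.delta, auto)
  finally show ?thesis .
qed

lemma Rs_tprod:
  assumes "h \<in> Tn (Suc j)"
  shows "slice [] [x] (tprod f h) = tprod f (slice [] [x] h)"
proof -
  have h': "slice [] [x] h \<in> Tn j" by (rule Rs_Tn[OF assms])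
  show ?thesis
  proof
    fix v
    have e: "tprod f (slice [] [x] h) v = (if j \<le> length v then f (take (length v - j) v) * slice [] [x] h (drop (length v - j) v) else 0)"
      by (rule tprod_right[OF h'])
    show "slice [] [x] (tprod f h) v = tprod f (slice [] [x] h) v"
      unfolding e by (simp add: tprod_right[OF assms] slice_def Suc_diff_le)
  qed
qed

lemma W_Ls:
  assumes R: "tsubspace N R" and w: "w \<in> Wsp N R (Suc n)"
  shows "slice [x] [] w \<in> Wsp N R n"
proof (cases "n < N")
  case True
  have "w \<in> Tn (Suc n)" using W_Tn[OF R] w by blast
  then have "slice [x] [] w \<in> Tn n" by (rule Ls_Tn)
  then show ?thesis using True by (simp add: Wsp_eq)
next
  case False
  have RT: "R \<subseteq> Tn N" using R by (simp add: tsubspace_def)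
  have e1: "Wsp N R n = (\<Inter>i\<in>{0..n - N}. T.span (Gen N R n i))" using False by (simp add: Wsp_eq)
  have e2: "Wsp N R (Suc n) = (\<Inter>i\<in>{0..Suc n - N}. T.span (Gen N R (Suc n) i))" using False by (simp add: Wsp_eq)
  show ?thesis unfolding e1
  proof (rule INT_I)
    fix i assume i: "i \<in> {0..n - N}"
    have "Suc i \<in> {0..Suc n - N}" using i False by auto
    then have "w \<in> T.span (Gen N R (Suc n) (Suc i))"
      using w unfolding e2 by blast
    then have "slice [x] [] w \<in> slice [x] [] ` T.span (Gen N R (Suc n) (Suc i))" by blast
    also have "\<dots> = T.span (slice [x] [] ` Gen N R (Suc n) (Suc i))"
      by (rule module_hom.span_image[OF slice_lin, symmetric])
    also have "\<dots> \<subseteq> T.span (Gen N R n i)"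
    proof (rule T.span_mono, rule)
      fix y assume "y \<in> slice [x] [] ` Gen N R (Suc n) (Suc i)"
      then obtain z where z: "z \<in> Gen N R (Suc n) (Suc i)" and y: "y = slice [x] [] z" by blast
      from z obtain f r g where zz: "z = tprod (tprod f r) g" and
        f: "f \<in> Tn (Suc i)" and r: "r \<in> R" and g: "g \<in> Tn (Suc n - N - Suc i)"
        unfolding Gen_def by blast
      have rT: "r \<in> Tn N" using r RT by blast
      have fr: "tprod f r \<in> Tn (Suc (i + N))" using tprod_Tn[OF f rT] by simp
      have "y = tprod (tprod (slice [x] [] f) r) g"
        unfolding y zz Ls_tprod[OF fr] Ls_tprod[OF f] ..
      moreover have "slice [x] [] f \<in> Tn i" by (rule Ls_Tn[OF f])
      moreover have "g \<in> Tn (n - N - i)" using g by simp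
      ultimately show "y \<in> Gen N R n i" using r unfolding Gen_def by blast
    qed
    finally show "slice [x] [] w \<in> T.span (Gen N R n i)" .
  qed
qed

lemma W_Rs:
  assumes R: "tsubspace N R" and w: "w \<in> Wsp N R (Suc n)"
  shows "slice [] [x] w \<in> Wsp N R n"
proof (cases "n < N")
  case True
  have "w \<in> Tn (Suc n)" using W_Tn[OF R] w by blast
  then have "slice [] [x] w \<in> Tn n" by (rule Rs_Tn)
  then show ?thesis using True by (simp add: Wsp_eq)
next
  case False
  have e1: "Wsp N R n = (\<Inter>i\<in>{0..n - N}. T.span (Gen N R n i))" using False by (simp add: Wsp_eq)
  have e2: "Wsp N R (Suc n) = (\<Inter>i\<in>{0..Suc n - N}. T.span (Gen N R (Suc n) i))" using False by (simp add: Wsp_eq)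
  show ?thesis unfolding e1
  proof (rule INT_I)
    fix i assume i: "i \<in> {0..n - N}"
    have "i \<in> {0..Suc n - N}" using i False by auto
    then have "w \<in> T.span (Gen N R (Suc n) i)"
      using w unfolding e2 by blast
    then have "slice [] [x] w \<in> slice [] [x] ` T.span (Gen N R (Suc n) i)" by blast
    also have "\<dots> = T.span (slice [] [x] ` Gen N R (Suc n) i)"
      by (rule module_hom.span_image[OF slice_lin, symmetric])
    also have "\<dots> \<subseteq> T.span (Gen N R n i)"
    proof (rule T.span_mono, rule)
      fix y assume "y \<in> slice [] [x] ` Gen N R (Suc n) i"
      then obtain z where z: "z \<in> Gen N R (Suc n) i" and y: "y = slice [] [x] z" by blast
      from z obtain f r g where zz: "z = tprod (tprod f r) g" and
        f: "f \<in> Tn i" and r: "r \<in> R" and g: "g \<in> Tn (Suc n - N - i)"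
        unfolding Gen_def by blast
      have "Suc n - N - i = Suc (n - N - i)" using False i by auto
      then have g': "g \<in> Tn (Suc (n - N - i))" using g by simp
      have "y = tprod (tprod f r) (slice [] [x] g)"
        unfolding y zz Rs_tprod[OF g'] ..
      moreover have "slice [] [x] g \<in> Tn (n - N - i)" by (rule Rs_Tn[OF g'])
      ultimately show "y \<in> Gen N R n i" using r f unfolding Gen_def by blast
    qed
    finally show "slice [] [x] w \<in> T.span (Gen N R n i)" .
  qed
qed

lemma W_slice_right:
  assumes R: "tsubspace N R"
  shows "w \<in> Wsp N R (n + length c) \<Longrightarrow> slice [] c w \<in> Wsp N R n"
proof (induction c arbitrary: w rule: rev_induct)
  case Nil then show ?case by simp
next
  case (snoc x c)
  have e: "n + length (c @ [x]) = Suc (n + length c)" by simp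
  have "w \<in> Wsp N R (Suc (n + length c))" using snoc.prems[unfolded e] .
  then have "slice [] [x] w \<in> Wsp N R (n + length c)"
    by (rule W_Rs[OF R])
  then show ?case unfolding slice_snoc by (rule snoc.IH)
qed

lemma W_slice:
  assumes R: "tsubspace N R"
  shows "w \<in> Wsp N R (length a + n + length c) \<Longrightarrow> slice a c w \<in> Wsp N R n"
proof (induction a arbitrary: w)
  case Nil
  have "w \<in> Wsp N R (n + length c)" using Nil.prems by simp
  then show ?case by (rule W_slice_right[OF R])
next
  case (Cons x a)
  have e: "length (x # a) + n + length c = Suc (length a + n + length c)" by simp
  have "w \<in> Wsp N R (Suc (length a + n + length c))" using Cons.prems[unfolded e] .
  then have "slice [x] [] w \<in> Wsp N R (length a + n + length c)"
    by (rule W_Ls[OF R])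
  then have "slice a c (slice [x] [] w) \<in> Wsp N R n" by (rule Cons.IH)
  then show ?case by (simp only: slice_Cons[of x a c w])
qed

lemma lin_on_0:
  assumes "lin_on s1 s2 S f" "(0::'a::monoid_add) \<in> S"
  shows "f 0 = (0::'b::ab_group_add)"
proof -
  have "f (0 + 0) = f 0 + f 0" using assms unfolding lin_on_def by blast
  then show ?thesis by simp
qed

lemma lin_on_sum:
  assumes f: "lin_on s1 s2 S f" and z: "(0::'a::comm_monoid_add) \<in> S"
    and add: "\<forall>x\<in>S. \<forall>y\<in>S. x + y \<in> S" and t: "\<forall>i\<in>I. t i \<in> S"
  shows "f (sum t I) = (\<Sum>i\<in>I. (f (t i) :: 'b::ab_group_add))"
  using t
proof (induction I rule: infinite_finite_induct)
  case (infinite A) then show ?case using lin_on_0[OF f z] by simp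
next
  case empty then show ?case using lin_on_0[OF f z] by simp
next
  case (insert x F)
  have sF: "sum t F \<in> S"
    using insert.prems
  proof (induction F rule: infinite_finite_induct)
    case (insert y G) then show ?case using add by auto
  qed (use z in auto)
  have "f (sum t (insert x F)) = f (t x + sum t F)" using insert.hyps by simp
  also have "\<dots> = f (t x) + f (sum t F)"
    using f sF insert.prems unfolding lin_on_def by blast
  finally show ?case using insert by simp
qed

lemma lin_on_diff:
  assumes "lin_on s1 s2 S f" "x \<in> S" "y \<in> S" "(x::'a::ab_group_add) - y \<in> S"
  shows "f (x - y) = f x - (f y :: 'b::ab_group_add)"
proof -
  have "f ((x - y) + y) = f (x - y) + f y" using assms unfolding lin_on_def by blast
  then show ?thesis by (simp add: algebra_simps)
qed

lemma sum_hd: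
  assumes fin: "finite S" and ne: "\<forall>u\<in>S. u \<noteq> []"
    and z: "\<forall>x. x # v \<notin> S \<longrightarrow> H x (x # v) = (0::'b::comm_monoid_add)"
  shows "(\<Sum>u\<in>S. if tl u = v then H (hd u) u else 0) = (\<Sum>x\<in>hd ` S. H x (x # v))"
proof -
  let ?A = "{u\<in>S. tl u = v}"
  have eqA: "\<forall>u\<in>?A. u = hd u # v" using ne by auto
  have "(\<Sum>u\<in>S. if tl u = v then H (hd u) u else 0) = (\<Sum>u\<in>?A. H (hd u) u)"
    using fin by (simp add: sum.inter_filter)
  also have "\<dots> = (\<Sum>u\<in>?A. H (hd u) (hd u # v))"
    by (rule sum.cong[OF refl]) (metis eqA)
  also have "\<dots> = (\<Sum>x\<in>hd ` ?A. H x (x # v))"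
  proof (rule sum.reindex[symmetric, unfolded comp_def])
    show "inj_on hd ?A" using eqA by (metis (no_types, lifting) inj_onI)
  qed
  also have "\<dots> = (\<Sum>x\<in>hd ` S. H x (x # v))"
  proof (rule sum.mono_neutral_left)
    show "finite (hd ` S)" using fin by simp
    show "hd ` ?A \<subseteq> hd ` S" by auto
    show "\<forall>i\<in>hd ` S - hd ` ?A. H i (i # v) = 0"
    proof
      fix x assume x: "x \<in> hd ` S - hd ` ?A"
      have "x # v \<notin> S"
      proof
        assume "x # v \<in> S"
        then have "x # v \<in> ?A" by simp
        then have "x \<in> hd ` ?A" by (metis image_eqI list.sel(1))
        then show False using x by blast
      qed
      then show "H x (x # v) = 0" using z by blast
    qed
  qed
  finally show ?thesis .
qed

lemma sum_last:
  assumes fin: "finite S" and ne: "\<forall>u\<in>S. u \<noteq> []"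
    and z: "\<forall>x. v @ [x] \<notin> S \<longrightarrow> H x (v @ [x]) = (0::'b::comm_monoid_add)"
  shows "(\<Sum>u\<in>S. if butlast u = v then H (last u) u else 0) = (\<Sum>x\<in>last ` S. H x (v @ [x]))"
proof -
  let ?A = "{u\<in>S. butlast u = v}"
  have eqA: "\<forall>u\<in>?A. u = v @ [last u]" using ne by (auto simp: append_butlast_last_id)
  have "(\<Sum>u\<in>S. if butlast u = v then H (last u) u else 0) = (\<Sum>u\<in>?A. H (last u) u)"
    using fin by (simp add: sum.inter_filter)
  also have "\<dots> = (\<Sum>u\<in>?A. H (last u) (v @ [last u]))"
    by (rule sum.cong[OF refl]) (metis eqA)
  also have "\<dots> = (\<Sum>x\<in>last ` ?A. H x (v @ [x]))"
  proof (rule sum.reindex[symmetric, unfolded comp_def])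
    show "inj_on last ?A" using eqA by (metis (no_types, lifting) inj_onI)
  qed
  also have "\<dots> = (\<Sum>x\<in>last ` S. H x (v @ [x]))"
  proof (rule sum.mono_neutral_left)
    show "finite (last ` S)" using fin by simp
    show "last ` ?A \<subseteq> last ` S" by auto
    show "\<forall>i\<in>last ` S - last ` ?A. H i (v @ [i]) = 0"
    proof
      fix x assume x: "x \<in> last ` S - last ` ?A"
      have "v @ [x] \<notin> S"
      proof
        assume "v @ [x] \<in> S"
        then have "v @ [x] \<in> ?A" by simp
        then have "x \<in> last ` ?A" by (metis image_eqI last_snoc)
        then show False using x by blast
      qed
      then show "H x (v @ [x]) = 0" using z by blast
    qed
  qed
  finally show ?thesis .
qed

lemma take_drop_split: "take i u @ take k (drop i u) @ drop (i + k) u = u"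
proof -
  have "drop (i + k) u = drop k (drop i u)" by (simp add: add.commute)
  then show ?thesis by (simp only: append_take_drop_id)
qed

lemma sum_key:
  assumes fin: "finite S" and len: "\<forall>u\<in>S. length u = n" and ik: "i + k \<le> n"
    and z: "\<forall>a c. a @ v @ c \<notin> S \<longrightarrow> H a c (a @ v @ c) = (0::'b::comm_monoid_add)"
  shows "(\<Sum>u\<in>S. if take k (drop i u) = v then H (take i u) (drop (i + k) u) u else 0)
       = (\<Sum>(a, c)\<in>(\<lambda>u. (take i u, drop (i + k) u)) ` S. H a c (a @ v @ c))"
proof -
  let ?A = "{u\<in>S. take k (drop i u) = v}"
  let ?key = "\<lambda>u. (take i u, drop (i + k) u)"
  have eqA: "\<forall>u\<in>?A. u = take i u @ v @ drop (i + k) u"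
  proof
    fix u assume "u \<in> ?A"
    then have "v = take k (drop i u)" by simp
    then show "u = take i u @ v @ drop (i + k) u" by (simp add: take_drop_split)
  qed
  have "(\<Sum>u\<in>S. if take k (drop i u) = v then H (take i u) (drop (i + k) u) u else 0)
      = (\<Sum>u\<in>?A. H (take i u) (drop (i + k) u) u)"
    using fin by (simp add: sum.inter_filter)
  also have "\<dots> = (\<Sum>u\<in>?A. (\<lambda>(a, c). H a c (a @ v @ c)) (?key u))"
    by (rule sum.cong[OF refl]) (use eqA in \<open>auto\<close>)
  also have "\<dots> = (\<Sum>y\<in>?key ` ?A. (\<lambda>(a, c). H a c (a @ v @ c)) y)"
  proof (rule sum.reindex[symmetric, unfolded comp_def])
    show "inj_on ?key ?A"
    proof (rule inj_onI)
      fix x y assume "x \<in> ?A" "y \<in> ?A" "?key x = ?key y"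
      then show "x = y" using eqA by (metis prod.inject)
    qed
  qed
  also have "\<dots> = (\<Sum>y\<in>?key ` S. (\<lambda>(a, c). H a c (a @ v @ c)) y)"
  proof (rule sum.mono_neutral_left)
    show "finite (?key ` S)" using fin by simp
    show "?key ` ?A \<subseteq> ?key ` S" by auto
    show "\<forall>y\<in>?key ` S - ?key ` ?A. (\<lambda>(a, c). H a c (a @ v @ c)) y = 0"
    proof
      fix y assume y: "y \<in> ?key ` S - ?key ` ?A"
      then obtain u' where u': "u' \<in> S" "y = ?key u'" by blast
      let ?a = "take i u'" and ?c = "drop (i + k) u'"
      have la: "length ?a = i" using len u' ik by auto
      have lc: "length ?c = n - (i + k)" using len u' by auto
      have "?a @ v @ ?c \<notin> S"
      proof
        assume in_S: "?a @ v @ ?c \<in> S"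
        then have "length (?a @ v @ ?c) = n" using len by blast
        then have lv: "length v = k" using la lc ik by simp
        have k1: "take i (?a @ v @ ?c) = ?a" using la by simp
        have k2: "drop (i + k) (?a @ v @ ?c) = ?c" using la lv by simp
        have k3: "take k (drop i (?a @ v @ ?c)) = v" using la lv by simp
        have "?a @ v @ ?c \<in> ?A" using in_S k3 by simp
        then have "?key (?a @ v @ ?c) \<in> ?key ` ?A" by (rule imageI)
        moreover have "?key (?a @ v @ ?c) = y" using k1 k2 u'(2) by (simp only:)
        ultimately have "y \<in> ?key ` ?A" by (simp only:)
        then show False using y by blast
      qed
      then show "(\<lambda>(a, c). H a c (a @ v @ c)) y = 0" using z u' by auto
    qed
  qed
  finally show ?thesis .
qed

lemma single_add: "single v (a + b) = single v a + (single v b :: _ \<Rightarrow> 'b::monoid_add)"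
  by (auto simp: single_def fun_eq_iff)

lemma single_0[simp]: "single v 0 = 0"
  by (auto simp: single_def fun_eq_iff)

lemma single_diff: "single v (a - b) = single v a - (single v b :: _ \<Rightarrow> 'b::group_add)"
  by (auto simp: single_def fun_eq_iff)

lemma single_sum: "single v (sum f A) = (\<Sum>a\<in>A. single v (f a) :: _ \<Rightarrow> 'b::comm_monoid_add)"
  by (induction A rule: infinite_finite_induct) (auto simp: single_add)

locale BM =
  fixes N :: nat and R :: "('x list \<Rightarrow> 'k::field) set"
    and smult :: "'k \<Rightarrow> 'm::ab_group_add \<Rightarrow> 'm" and lact ract :: "'x \<Rightarrow> 'm \<Rightarrow> 'm"
  assumes N2: "N \<ge> 2" and tsub: "tsubspace N R" and bim: "bimod N R smult lact ract"
begin

lemma vsM: "vector_space smult" using bim by (simp add: bimod_def)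

sublocale Ms: vector_space smult by (rule vsM)

lemma vsMT: "vector_space (msc smult :: 'k \<Rightarrow> ('x list \<Rightarrow> 'm) \<Rightarrow> _)" by (rule vs_msc[OF vsM])

sublocale MT: vector_space "msc smult :: 'k \<Rightarrow> ('x list \<Rightarrow> 'm) \<Rightarrow> _" by (rule vsMT)

lemma lact_add: "lact x (a + b) = lact x a + lact x b"
  using bim unfolding bimod_def lin_on_def by blast
lemma ract_add: "ract x (a + b) = ract x a + ract x b"
  using bim unfolding bimod_def lin_on_def by blast
lemma lact_smult: "lact x (smult c a) = smult c (lact x a)"
  using bim unfolding bimod_def lin_on_def by blast
lemma ract_smult: "ract x (smult c a) = smult c (ract x a)"
  using bim unfolding bimod_def lin_on_def by blast
lemma lact_0[simp]: "lact x 0 = 0"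
  using lact_add[of x 0 0] by simp
lemma ract_0[simp]: "ract x 0 = 0"
  using ract_add[of x 0 0] by simp

lemma lword_add: "lword lact a (m1 + m2) = lword lact a m1 + lword lact a m2"
  by (induction a) (simp_all add: lword_def lact_add)
lemma lword_smult: "lword lact a (smult c m) = smult c (lword lact a m)"
  by (induction a) (simp_all add: lword_def lact_smult)
lemma lword_0[simp]: "lword lact a 0 = 0"
  by (induction a) (simp_all add: lword_def)
lemma rword_add: "rword ract a (m1 + m2) = rword ract a m1 + rword ract a m2"
  by (induction a arbitrary: m1 m2) (simp_all add: rword_def ract_add)
lemma rword_smult: "rword ract a (smult c m) = smult c (rword ract a m)"
  by (induction a arbitrary: m) (simp_all add: rword_def ract_smult)
lemma rword_0[simp]: "rword ract a 0 = 0"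
  by (induction a) (simp_all add: rword_def)

lemma msc_single: "msc smult c (single v m) = single v (smult c m)"
  by (auto simp: msc_def single_def fun_eq_iff)

lemma mt_apply: "mt smult m w u = smult (w u) m"
  by (simp add: mt_def)

lemma mt_add_w: "mt smult m (w1 + w2) = mt smult m w1 + mt smult m w2"
  by (simp add: mt_def fun_eq_iff Ms.scale_left_distrib)
lemma mt_sc_w: "mt smult m (sc c w) = msc smult c (mt smult m w)"
  by (simp add: mt_def msc_def sc_def fun_eq_iff)
lemma mt_add_m: "mt smult (m1 + m2) w = mt smult m1 w + mt smult m2 w"
  by (simp add: mt_def fun_eq_iff Ms.scale_right_distrib)
lemma mt_smult_m: "mt smult (smult c m) w = msc smult c (mt smult m w)"
  by (simp add: mt_def msc_def fun_eq_iff mult.commute)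

lemma fsupp_mt: "fsupp (mt smult m w) \<subseteq> fsupp w"
  by (auto simp: fsupp_def mt_def)

lemma mt_in_MW: "w \<in> Wsp N R n \<Longrightarrow> mt smult m w \<in> MW N R smult n"
  unfolding MW_def by (rule MT.span_base) blast

lemma MW_sub: "MT.subspace (MW N R smult n)"
  unfolding MW_def by simp

lemma MW_0: "0 \<in> MW N R smult n"
  using MT.subspace_0[OF MW_sub] .
lemma MW_add: "t1 \<in> MW N R smult n \<Longrightarrow> t2 \<in> MW N R smult n \<Longrightarrow> t1 + t2 \<in> MW N R smult n"
  using MT.subspace_add[OF MW_sub] .
lemma MW_diff: "t1 \<in> MW N R smult n \<Longrightarrow> t2 \<in> MW N R smult n \<Longrightarrow> t1 - t2 \<in> MW N R smult n"
  using MT.subspace_diff[OF MW_sub] .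
lemma MW_scale: "t \<in> MW N R smult n \<Longrightarrow> msc smult c t \<in> MW N R smult n"
  using MT.subspace_scale[OF MW_sub] .
lemma MW_sum: "(\<And>i. i \<in> I \<Longrightarrow> t i \<in> MW N R smult n) \<Longrightarrow> sum t I \<in> MW N R smult n"
  using MT.subspace_sum[OF MW_sub] by blast

lemma MW_fin: "t \<in> MW N R smult n \<Longrightarrow> finite (fsupp t)"
  unfolding MW_def
proof (induction rule: MT.span_induct_alt)
  case base then show ?case by (simp add: fsupp_def)
next
  case (step c x y)
  then obtain m w where x: "x = mt smult m w" and w: "w \<in> Wsp N R n" by blast
  have "finite (fsupp w)" using W_Tn[OF tsub] w by (auto simp: Tn_def)
  then have fx: "finite (fsupp x)" using fsupp_mt x by (metis finite_subset)
  have "fsupp (msc smult c x + y) \<subseteq> fsupp x \<union> fsupp y"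
    by (auto simp: fsupp_def msc_def)
  then show ?case using fx step.IH by (metis finite_UnI finite_subset)
qed

lemma bKc_0[simp]: "bKc_basis N lact ract q w 0 = 0"
  by (simp add: bKc_basis_def)

lemma bKc_add: "bKc_basis N lact ract q w (a + b) = bKc_basis N lact ract q w a + bKc_basis N lact ract q w b"
  by (simp add: bKc_basis_def single_add lact_add ract_add lword_add rword_add sum.distrib)

lemma bKc_smult: "bKc_basis N lact ract q w (smult c a) = msc smult c (bKc_basis N lact ract q w a)"
  by (simp add: bKc_basis_def msc_single lact_smult ract_smult lword_smult rword_smult
      MT.scale_right_diff_distrib MT.scale_sum_right)

lemma bK_sup:
  assumes "finite S" "fsupp t \<subseteq> S"
  shows "bK_chain N lact ract q t = (\<Sum>w\<in>S. bKc_basis N lact ract q w (t w))"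
  unfolding bK_chain_def
proof (rule sum.mono_neutral_left[OF assms])
  show "\<forall>i\<in>S - fsupp t. bKc_basis N lact ract q i (t i) = 0"
    by (auto simp: fsupp_def)
qed

lemma bK_add:
  assumes "finite (fsupp t1)" "finite (fsupp t2)"
  shows "bK_chain N lact ract q (t1 + t2) = bK_chain N lact ract q t1 + bK_chain N lact ract q t2"
proof -
  let ?S = "fsupp t1 \<union> fsupp t2"
  have f: "finite ?S" using assms by simp
  have "bK_chain N lact ract q (t1 + t2) = (\<Sum>w\<in>?S. bKc_basis N lact ract q w ((t1 + t2) w))"
    by (rule bK_sup[OF f fsupp_add])
  also have "\<dots> = (\<Sum>w\<in>?S. bKc_basis N lact ract q w (t1 w)) + (\<Sum>w\<in>?S. bKc_basis N lact ract q w (t2 w))"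
    by (simp add: bKc_add sum.distrib)
  also have "\<dots> = bK_chain N lact ract q t1 + bK_chain N lact ract q t2"
    using bK_sup[OF f, of t1 q] bK_sup[OF f, of t2 q] by simp
  finally show ?thesis .
qed

lemma bK_scale:
  assumes "finite (fsupp t)"
  shows "bK_chain N lact ract q (msc smult c t) = msc smult c (bK_chain N lact ract q t)"
proof -
  have s: "fsupp (msc smult c t) \<subseteq> fsupp t" by (auto simp: fsupp_def msc_def)
  have "bK_chain N lact ract q (msc smult c t) = (\<Sum>w\<in>fsupp t. bKc_basis N lact ract q w (msc smult c t w))"
    by (rule bK_sup[OF assms s])
  also have "\<dots> = msc smult c (\<Sum>w\<in>fsupp t. bKc_basis N lact ract q w (t w))"
    by (simp add: msc_def[of smult c t] bKc_smult MT.scale_sum_right)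
  also have "\<dots> = msc smult c (bK_chain N lact ract q t)"
    by (simp add: bK_chain_def)
  finally show ?thesis .
qed

lemma bK_0[simp]: "bK_chain N lact ract q 0 = 0"
  by (simp add: bK_chain_def fsupp_def)

lemma nu_even: "even p \<Longrightarrow> nu N (Suc p) = Suc (nu N p)"
  by (simp add: nu_def)

lemma nu_odd: "odd p \<Longrightarrow> nu N (Suc p) = nu N p + N - 1"
proof -
  assume p: "odd p"
  then have "Suc p div 2 = p div 2 + 1" by presburger
  then show ?thesis using p N2 by (simp add: nu_def)
qed

lemma chain_even:
  assumes p: "even p" and w: "w \<in> Wsp N R (nu N (Suc p))"
  shows "bK_chain N lact ract (Suc p) (mt smult m w)
    = (\<Sum>x\<in>hd ` fsupp w. mt smult (ract x m) (slice [x] [] w))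
      - (\<Sum>x\<in>last ` fsupp w. mt smult (lact x m) (slice [] [x] w))"
proof -
  let ?S = "fsupp w"
  have wT: "w \<in> Tn (Suc (nu N p))" using W_Tn[OF tsub] w nu_even[OF p] by auto
  have fin: "finite ?S" using wT by (simp add: Tn_def)
  have ne: "\<forall>u\<in>?S. u \<noteq> []" using wT by (auto simp: Tn_def)
  have "bK_chain N lact ract (Suc p) (mt smult m w) = (\<Sum>u\<in>?S. bKc_basis N lact ract (Suc p) u (mt smult m w u))"
    by (rule bK_sup[OF fin fsupp_mt])
  also have "\<dots> = (\<Sum>u\<in>?S. single (tl u) (smult (w u) (ract (hd u) m)) - single (butlast u) (smult (w u) (lact (last u) m)))"
    using p by (simp add: bKc_basis_def mt_apply lact_smult ract_smult)
  finally have e1: "bK_chain N lact ract (Suc p) (mt smult m w) = \<dots>" .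
  show ?thesis
  proof (rule ext)
    fix v
    have "bK_chain N lact ract (Suc p) (mt smult m w) v
      = (\<Sum>u\<in>?S. if tl u = v then smult (w u) (ract (hd u) m) else 0)
        - (\<Sum>u\<in>?S. if butlast u = v then smult (w u) (lact (last u) m) else 0)"
      unfolding e1 by (simp add: sum_app sum_subtractf single_def eq_commute[of v])
    also have "\<dots> = (\<Sum>x\<in>hd ` ?S. smult (w (x # v)) (ract x m))
        - (\<Sum>x\<in>last ` ?S. smult (w (v @ [x])) (lact x m))"
    proof -
      have a: "(\<Sum>u\<in>?S. if tl u = v then smult (w u) (ract (hd u) m) else 0)
          = (\<Sum>x\<in>hd ` ?S. smult (w (x # v)) (ract x m))"
        by (rule sum_hd[OF fin ne, where H = "\<lambda>x u. smult (w u) (ract x m)"]) (auto simp: fsupp_def)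
      have b: "(\<Sum>u\<in>?S. if butlast u = v then smult (w u) (lact (last u) m) else 0)
          = (\<Sum>x\<in>last ` ?S. smult (w (v @ [x])) (lact x m))"
        by (rule sum_last[OF fin ne, where H = "\<lambda>x u. smult (w u) (lact x m)"]) (auto simp: fsupp_def)
      show ?thesis using a b by simp
    qed
    also have "\<dots> = ((\<Sum>x\<in>hd ` fsupp w. mt smult (ract x m) (slice [x] [] w))
      - (\<Sum>x\<in>last ` fsupp w. mt smult (lact x m) (slice [] [x] w))) v"
      by (simp add: sum_app mt_apply slice_def)
    finally show "bK_chain N lact ract (Suc p) (mt smult m w) v = \<dots>" .
  qed
qed

lemma chain_odd:
  assumes p: "odd p" and w: "w \<in> Wsp N R (nu N (Suc p))"
  shows "bK_chain N lact ract (Suc p) (mt smult m w)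
    = (\<Sum>i<N. \<Sum>(a, c)\<in>(\<lambda>u. (take i u, drop (i + nu N p) u)) ` fsupp w.
          mt smult (lword lact c (rword ract a m)) (slice a c w))"
proof -
  let ?S = "fsupp w"
  let ?k = "nu N p"
  let ?n = "nu N (Suc p)"
  have n: "?n = ?k + N - 1" by (rule nu_odd[OF p])
  have k1: "?k \<ge> 1" using p by (simp add: nu_def)
  have wT: "w \<in> Tn ?n" using W_Tn[OF tsub] w by auto
  have fin: "finite ?S" using wT by (simp add: Tn_def)
  have len: "\<forall>u\<in>?S. length u = ?n" using wT by (auto simp: Tn_def)
  have "bK_chain N lact ract (Suc p) (mt smult m w) = (\<Sum>u\<in>?S. bKc_basis N lact ract (Suc p) u (mt smult m w u))"
    by (rule bK_sup[OF fin fsupp_mt])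
  also have "\<dots> = (\<Sum>u\<in>?S. \<Sum>i<N. single (take ?k (drop i u))
        (smult (w u) (lword lact (drop (i + ?k) u) (rword ract (take i u) m))))"
  proof (rule sum.cong[OF refl])
    fix u assume u: "u \<in> ?S"
    have l1: "Suc (length u - N) = ?k" using len u n N2 k1 by auto
    have l2: "\<And>i. Suc (i + length u - N) = i + ?k" using len u n N2 k1 by auto
    show "bKc_basis N lact ract (Suc p) u (mt smult m w u) = (\<Sum>i<N. single (take ?k (drop i u))
        (smult (w u) (lword lact (drop (i + ?k) u) (rword ract (take i u) m))))"
      using p by (simp add: bKc_basis_def mt_apply lword_smult rword_smult l1 l2)
  qed
  finally have e1: "bK_chain N lact ract (Suc p) (mt smult m w) = \<dots>" .
  show ?thesis
  proof (rule ext)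
    fix v
    have "bK_chain N lact ract (Suc p) (mt smult m w) v
      = (\<Sum>u\<in>?S. \<Sum>i<N. if take ?k (drop i u) = v then
           smult (w u) (lword lact (drop (i + ?k) u) (rword ract (take i u) m)) else 0)"
      unfolding e1 by (simp add: sum_app single_def eq_commute[of v])
    also have "\<dots> = (\<Sum>i<N. \<Sum>u\<in>?S. if take ?k (drop i u) = v then
           smult (w u) (lword lact (drop (i + ?k) u) (rword ract (take i u) m)) else 0)"
      by (rule sum.swap)
    also have "\<dots> = (\<Sum>i<N. \<Sum>(a, c)\<in>(\<lambda>u. (take i u, drop (i + ?k) u)) ` ?S.
           smult (w (a @ v @ c)) (lword lact c (rword ract a m)))"
    proof (rule sum.cong[OF refl])
      fix i assume i: "i \<in> {..<N}"
      have ik: "i + ?k \<le> ?n" using i n N2 by auto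
      show "(\<Sum>u\<in>?S. if take ?k (drop i u) = v then
           smult (w u) (lword lact (drop (i + ?k) u) (rword ract (take i u) m)) else 0)
        = (\<Sum>(a, c)\<in>(\<lambda>u. (take i u, drop (i + ?k) u)) ` ?S.
           smult (w (a @ v @ c)) (lword lact c (rword ract a m)))"
        by (rule sum_key[OF fin len ik, where H = "\<lambda>a c u. smult (w u) (lword lact c (rword ract a m))"])
          (auto simp: fsupp_def)
    qed
    also have "\<dots> = (\<Sum>i<N. \<Sum>(a, c)\<in>(\<lambda>u. (take i u, drop (i + nu N p) u)) ` fsupp w.
          mt smult (lword lact c (rword ract a m)) (slice a c w)) v"
      by (simp add: sum_app mt_apply slice_def split_beta)
    finally show "bK_chain N lact ract (Suc p) (mt smult m w) v = \<dots>" .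
  qed
qed

lemma gen_MW:
  assumes w: "w \<in> Wsp N R (nu N (Suc p))"
  shows "bK_chain N lact ract (Suc p) (mt smult m w) \<in> MW N R smult (nu N p)"
proof (cases "even p")
  case True
  have w': "w \<in> Wsp N R (Suc (nu N p))" using w nu_even[OF True] by simp
  show ?thesis unfolding chain_even[OF True w]
    by (intro MW_diff MW_sum mt_in_MW W_Ls[OF tsub w'] W_Rs[OF tsub w'])
next
  case False
  let ?k = "nu N p"
  let ?n = "nu N (Suc p)"
  have n: "?n = ?k + N - 1" by (rule nu_odd) (use False in simp)
  have k1: "?k \<ge> 1" using False by (simp add: nu_def)
  have wT: "w \<in> Tn ?n" using W_Tn[OF tsub] w by auto
  have len: "\<forall>u\<in>fsupp w. length u = ?n" using wT by (auto simp: Tn_def)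
  show ?thesis unfolding chain_odd[OF False w]
  proof (intro MW_sum)
    fix i y assume i: "i \<in> {..<N}" and y: "y \<in> (\<lambda>u. (take i u, drop (i + ?k) u)) ` fsupp w"
    then obtain u where u: "u \<in> fsupp w" and yu: "y = (take i u, drop (i + ?k) u)" by blast
    have lu: "length u = ?n" using len u by blast
    have "length (take i u) + ?k + length (drop (i + ?k) u) = ?n"
      using lu n i N2 k1 by auto
    then have "w \<in> Wsp N R (length (take i u) + ?k + length (drop (i + ?k) u))" using w by simp
    then have "slice (take i u) (drop (i + ?k) u) w \<in> Wsp N R ?k" by (rule W_slice[OF tsub])
    then show "(case y of (a, c) \<Rightarrow> mt smult (lword lact c (rword ract a m)) (slice a c w)) \<in> MW N R smult ?k"
      unfolding yu by (simp add: mt_in_MW)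
  qed
qed

lemma bK_MW:
  assumes t: "t \<in> MW N R smult (nu N (Suc p))"
  shows "bK_chain N lact ract (Suc p) t \<in> MW N R smult (nu N p)"
proof -
  have "finite (fsupp t) \<and> bK_chain N lact ract (Suc p) t \<in> MW N R smult (nu N p)"
    using t unfolding MW_def[of N R smult "nu N (Suc p)"]
  proof (induction rule: MT.span_induct_alt)
    case base
    have f0: "fsupp (0::'x list \<Rightarrow> 'm) = {}" by (simp add: fsupp_def)
    have z: "(\<lambda>a::'x list. 0::'m) = 0" by (simp add: zero_fun_def)
    show ?case
    proof (intro conjI)
      show "finite (fsupp (0::'x list \<Rightarrow> 'm))" unfolding f0 by (rule finite.emptyI)
      show "bK_chain N lact ract (Suc p) 0 \<in> MW N R smult (nu N p)" unfolding bK_0 by (rule MW_0)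
    qed
  next
    case (step c x y)
    then obtain m w where x: "x = mt smult m w" and w: "w \<in> Wsp N R (nu N (Suc p))" by blast
    have fx: "finite (fsupp x)" using x w mt_in_MW MW_fin by blast
    have fcx: "finite (fsupp (msc smult c x))"
      using fx by (rule finite_subset[rotated]) (auto simp: fsupp_def msc_def)
    have "fsupp (msc smult c x + y) \<subseteq> fsupp x \<union> fsupp y"
      by (auto simp: fsupp_def msc_def)
    then have f: "finite (fsupp (msc smult c x + y))" using fx step.IH by (metis finite_UnI finite_subset)
    have eq: "bK_chain N lact ract (Suc p) (msc smult c x + y)
        = msc smult c (bK_chain N lact ract (Suc p) x) + bK_chain N lact ract (Suc p) y"
      using bK_add[OF fcx] bK_scale[OF fx] step.IH by simp
    have bx: "bK_chain N lact ract (Suc p) x \<in> MW N R smult (nu N p)"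
      using gen_MW[OF w] x by simp
    show ?case
    proof (intro conjI f)
      show "bK_chain N lact ract (Suc p) (msc smult c x + y) \<in> MW N R smult (nu N p)"
        unfolding eq using bx step.IH by (intro MW_add MW_scale) auto
    qed
  qed
  then show ?thesis by blast
qed

lemma CdualD:
  assumes "\<phi> \<in> Cdual N R smult p"
  shows "lin_on (msc smult) (*) (MW N R smult (nu N p)) \<phi>" "\<And>t. t \<notin> MW N R smult (nu N p) \<Longrightarrow> \<phi> t = 0"
  using assms by (auto simp: Cdual_def)

lemma phi_add: "\<phi> \<in> Cdual N R smult p \<Longrightarrow> t1 \<in> MW N R smult (nu N p) \<Longrightarrow> t2 \<in> MW N R smult (nu N p)
    \<Longrightarrow> \<phi> (t1 + t2) = \<phi> t1 + \<phi> t2"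
  using CdualD(1) unfolding lin_on_def by blast

lemma phi_scale: "\<phi> \<in> Cdual N R smult p \<Longrightarrow> t \<in> MW N R smult (nu N p)
    \<Longrightarrow> \<phi> (msc smult c t) = c * \<phi> t"
  using CdualD(1) unfolding lin_on_def by blast

lemma phi_0: "\<phi> \<in> Cdual N R smult p \<Longrightarrow> \<phi> 0 = 0"
  using lin_on_0[OF CdualD(1) MW_0] by blast

lemma phi_sum: "\<phi> \<in> Cdual N R smult p \<Longrightarrow> (\<And>i. i \<in> I \<Longrightarrow> t i \<in> MW N R smult (nu N p))
    \<Longrightarrow> \<phi> (sum t I) = (\<Sum>i\<in>I. \<phi> (t i))"
  by (rule lin_on_sum[OF CdualD(1) MW_0]) (auto intro: MW_add)

lemma phi_diff: "\<phi> \<in> Cdual N R smult p \<Longrightarrow> t1 \<in> MW N R smult (nu N p) \<Longrightarrow> t2 \<in> MW N R smult (nu N p)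
    \<Longrightarrow> \<phi> (t1 - t2) = \<phi> t1 - \<phi> t2"
  by (rule lin_on_diff[OF CdualD(1)]) (auto intro: MW_diff)

lemma dC_Cdual:
  assumes phi: "\<phi> \<in> Cdual N R smult p"
  shows "dC N R smult lact ract p \<phi> \<in> Cdual N R smult (Suc p)"
proof -
  have "lin_on (msc smult) (*) (MW N R smult (nu N (Suc p))) (dC N R smult lact ract p \<phi>)"
    unfolding lin_on_def
  proof (intro conjI ballI allI)
    fix x y assume x: "x \<in> MW N R smult (nu N (Suc p))" and y: "y \<in> MW N R smult (nu N (Suc p))"
    have "bK_chain N lact ract (Suc p) (x + y) = bK_chain N lact ract (Suc p) x + bK_chain N lact ract (Suc p) y"
      using bK_add MW_fin x y by blast
    then show "dC N R smult lact ract p \<phi> (x + y) = dC N R smult lact ract p \<phi> x + dC N R smult lact ract p \<phi> y"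
      using x y MW_add phi_add[OF phi bK_MW[OF x] bK_MW[OF y]]
      by (simp add: dC_def algebra_simps)
  next
    fix c x assume x: "x \<in> MW N R smult (nu N (Suc p))"
    have "bK_chain N lact ract (Suc p) (msc smult c x) = msc smult c (bK_chain N lact ract (Suc p) x)"
      using bK_scale MW_fin x by blast
    then show "dC N R smult lact ract p \<phi> (msc smult c x) = c * dC N R smult lact ract p \<phi> x"
      using x MW_scale phi_scale[OF phi bK_MW[OF x]]
      by (simp add: dC_def algebra_simps)
  qed
  then show ?thesis by (auto simp: Cdual_def dC_def)
qed

lemma lword_dual: "lword (dual_lact ract) a u = (\<lambda>m. u (rword ract a m))"
  by (induction a) (simp_all add: lword_def rword_def dual_lact_def)

lemma rword_dual: "rword (dual_ract lact) c u = (\<lambda>m. u (lword lact c m))"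
  by (induction c arbitrary: u) (simp_all add: lword_def rword_def dual_ract_def)

lemma compat:
  assumes phi: "\<phi> \<in> Cdual N R smult p"
  shows "eta N R smult (Suc p) (dC N R smult lact ract p \<phi>) = dK N R lact ract p (eta N R smult p \<phi>)"
proof (rule ext)
  fix w
  show "eta N R smult (Suc p) (dC N R smult lact ract p \<phi>) w = dK N R lact ract p (eta N R smult p \<phi>) w"
  proof (cases "w \<in> Wsp N R (nu N (Suc p))")
    case False then show ?thesis by (simp add: eta_def dK_def bK_cochain_def)
  next
    case W: True
    let ?f = "eta N R smult p \<phi>"
    have LHS: "eta N R smult (Suc p) (dC N R smult lact ract p \<phi>) w
        = (\<lambda>m. - ((-1)^p) * \<phi> (bK_chain N lact ract (Suc p) (mt smult m w)))"
      using W mt_in_MW[OF W] by (simp add: eta_def dC_def)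
    show ?thesis
    proof (cases "even p")
      case ev: True
      have w': "w \<in> Wsp N R (Suc (nu N p))" using W nu_even[OF ev] by simp
      have Lw: "\<And>x. slice [x] [] w \<in> Wsp N R (nu N p)" by (rule W_Ls[OF tsub w'])
      have Rw: "\<And>x. slice [] [x] w \<in> Wsp N R (nu N p)" by (rule W_Rs[OF tsub w'])
      have RHS: "dK N R lact ract p ?f w = (\<Sum>x\<in>last ` fsupp w. dual_ract lact x (?f (slice [] [x] w)))
            - (\<Sum>x\<in>hd ` fsupp w. dual_lact ract x (?f (slice [x] [] w)))"
        using W ev by (simp add: dK_def bK_cochain_def)
      show ?thesis
      proof (rule ext)
        fix m
        have "eta N R smult (Suc p) (dC N R smult lact ract p \<phi>) w m
          = - (\<phi> ((\<Sum>x\<in>hd ` fsupp w. mt smult (ract x m) (slice [x] [] w))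
                - (\<Sum>x\<in>last ` fsupp w. mt smult (lact x m) (slice [] [x] w))))"
          unfolding LHS chain_even[OF ev W] using ev by simp
        also have "\<dots> = (\<Sum>x\<in>last ` fsupp w. \<phi> (mt smult (lact x m) (slice [] [x] w)))
            - (\<Sum>x\<in>hd ` fsupp w. \<phi> (mt smult (ract x m) (slice [x] [] w)))"
          by (subst phi_diff[OF phi], (intro MW_sum mt_in_MW Lw Rw)+)
             (simp add: phi_sum[OF phi] mt_in_MW Lw Rw)
        also have "\<dots> = dK N R lact ract p ?f w m"
          unfolding RHS by (simp add: sum_app dual_ract_def dual_lact_def eta_def Lw Rw)
        finally show "eta N R smult (Suc p) (dC N R smult lact ract p \<phi>) w m = dK N R lact ract p ?f w m" .
      qed
    next
      case od: False
      let ?k = "nu N p"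
      let ?n = "nu N (Suc p)"
      have n: "?n = ?k + N - 1" by (rule nu_odd) (use od in simp)
      have k1: "?k \<ge> 1" using od by (simp add: nu_def)
      have wT: "w \<in> Tn ?n" using W_Tn[OF tsub] W by auto
      have len: "\<forall>u\<in>fsupp w. length u = ?n" using wT by (auto simp: Tn_def)
      have SW: "slice a c w \<in> Wsp N R ?k"
        if "i < N" "(a, c) \<in> (\<lambda>u. (take i u, drop (i + ?k) u)) ` fsupp w" for i a c
      proof -
        from that obtain u where u: "u \<in> fsupp w" and a: "a = take i u" and c: "c = drop (i + ?k) u" by blast
        have lu: "length u = ?n" using len u by blast
        have "length a + ?k + length c = ?n"
          using lu n that(1) N2 k1 a c by auto
        then have "w \<in> Wsp N R (length a + ?k + length c)" using W by simp
        then show ?thesis by (rule W_slice[OF tsub])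
      qed
      have RHS: "dK N R lact ract p ?f w = (\<Sum>i<N. \<Sum>(a, c)\<in>(\<lambda>u. (take i u, drop (i + ?k) u)) ` fsupp w.
               lword (dual_lact ract) a (rword (dual_ract lact) c (?f (slice a c w))))"
        using W od by (simp add: dK_def bK_cochain_def)
      show ?thesis
      proof (rule ext)
        fix m
        have "eta N R smult (Suc p) (dC N R smult lact ract p \<phi>) w m
          = \<phi> (\<Sum>i<N. \<Sum>(a, c)\<in>(\<lambda>u. (take i u, drop (i + ?k) u)) ` fsupp w.
                mt smult (lword lact c (rword ract a m)) (slice a c w))"
          unfolding LHS chain_odd[OF od W] using od by simp
        also have "\<dots> = (\<Sum>i<N. \<Sum>(a, c)\<in>(\<lambda>u. (take i u, drop (i + ?k) u)) ` fsupp w.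
                \<phi> (mt smult (lword lact c (rword ract a m)) (slice a c w)))"
        proof -
          have in1: "\<And>i y. i \<in> {..<N} \<Longrightarrow> y \<in> (\<lambda>u. (take i u, drop (i + ?k) u)) ` fsupp w \<Longrightarrow>
              (case y of (a, c) \<Rightarrow> mt smult (lword lact c (rword ract a m)) (slice a c w)) \<in> MW N R smult ?k"
            using SW by (auto intro!: mt_in_MW)
          have T: "\<And>i. i \<in> {..<N} \<Longrightarrow> (\<Sum>(a, c)\<in>(\<lambda>u. (take i u, drop (i + ?k) u)) ` fsupp w.
                mt smult (lword lact c (rword ract a m)) (slice a c w)) \<in> MW N R smult ?k"
            by (rule MW_sum) (rule in1)
          have "\<phi> (\<Sum>i<N. \<Sum>(a, c)\<in>(\<lambda>u. (take i u, drop (i + ?k) u)) ` fsupp w.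
                mt smult (lword lact c (rword ract a m)) (slice a c w))
             = (\<Sum>i<N. \<phi> (\<Sum>(a, c)\<in>(\<lambda>u. (take i u, drop (i + ?k) u)) ` fsupp w.
                mt smult (lword lact c (rword ract a m)) (slice a c w)))"
            by (rule phi_sum[OF phi T])
          also have "\<dots> = (\<Sum>i<N. \<Sum>(a, c)\<in>(\<lambda>u. (take i u, drop (i + ?k) u)) ` fsupp w.
                \<phi> (mt smult (lword lact c (rword ract a m)) (slice a c w)))"
          proof (rule sum.cong[OF refl])
            fix i assume i: "i \<in> {..<N}"
            have "\<phi> (\<Sum>(a, c)\<in>(\<lambda>u. (take i u, drop (i + ?k) u)) ` fsupp w.
                mt smult (lword lact c (rword ract a m)) (slice a c w))
              = (\<Sum>y\<in>(\<lambda>u. (take i u, drop (i + ?k) u)) ` fsupp w.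
                \<phi> (case y of (a, c) \<Rightarrow> mt smult (lword lact c (rword ract a m)) (slice a c w)))"
              by (rule phi_sum[OF phi in1[OF i]])
            then show "\<phi> (\<Sum>(a, c)\<in>(\<lambda>u. (take i u, drop (i + ?k) u)) ` fsupp w.
                mt smult (lword lact c (rword ract a m)) (slice a c w))
              = (\<Sum>(a, c)\<in>(\<lambda>u. (take i u, drop (i + ?k) u)) ` fsupp w.
                \<phi> (mt smult (lword lact c (rword ract a m)) (slice a c w)))"
              by (simp add: prod.case_distrib)
          qed
          finally show ?thesis .
        qed
        also have "\<dots> = dK N R lact ract p ?f w m"
          unfolding RHS
          by (simp add: sum_app split_beta lword_dual rword_dual eta_def)
            (rule sum.cong[OF refl], rule sum.cong[OF refl], auto simp: SW)
        finally show "eta N R smult (Suc p) (dC N R smult lact ract p \<phi>) w m = dK N R lact ract p ?f w m" .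
      qed
    qed
  qed
qed

end

lemma decomp:
  assumes "finite (fsupp w)"
  shows "(\<Sum>u\<in>fsupp w. sc (w u) (single u (1::'k::field))) = w"
proof
  fix v
  have "(\<Sum>u\<in>fsupp w. sc (w u) (single u (1::'k))) v = (\<Sum>u\<in>fsupp w. if v = u then w v else 0)"
    by (auto simp: sum_app sc_def single_def intro!: sum.cong)
  also have "\<dots> = w v" using assms by (simp add: fsupp_def)
  finally show "(\<Sum>u\<in>fsupp w. sc (w u) (single u (1::'k))) v = w v" .
qed

lemma Mdual_sub: "T.subspace (Mdual (s :: 'k::field \<Rightarrow> 'm::ab_group_add \<Rightarrow> 'm))"
  unfolding T.subspace_def Mdual_def lin_on_def
  by (auto simp: sc_def algebra_simps)

lemma sc_eq: "(\<lambda>c u m. c * u m) = sc"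
  by (auto simp: sc_def fun_eq_iff)

context BM
begin

lemma MW_induct:
  assumes "t \<in> MW N R smult n" "P 0"
    "\<And>c m w y. w \<in> Wsp N R n \<Longrightarrow> P y \<Longrightarrow> P (msc smult c (mt smult m w) + y)"
  shows "P t"
  using assms(1) unfolding MW_def
proof (induction rule: MT.span_induct_alt)
  case base then show ?case by (rule assms(2))
next
  case (step c x y) then show ?case using assms(3) by blast
qed

lemma eta_Kcoch:
  assumes phi: "\<phi> \<in> Cdual N R smult p"
  shows "eta N R smult p \<phi> \<in> Kcoch N R smult p"
proof -
  let ?W = "Wsp N R (nu N p)"
  have "lin_on sc (\<lambda>c u m. c * u m) ?W (eta N R smult p \<phi>)"
    unfolding lin_on_def
  proof (intro conjI ballI allI)
    fix x y assume x: "x \<in> ?W" and y: "y \<in> ?W"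
    have xy: "x + y \<in> ?W" using T.subspace_add[OF W_sub x y] .
    show "eta N R smult p \<phi> (x + y) = eta N R smult p \<phi> x + eta N R smult p \<phi> y"
      using x y xy phi_add[OF phi mt_in_MW[OF x] mt_in_MW[OF y]]
      by (simp add: eta_def mt_add_w fun_eq_iff)
  next
    fix c x assume x: "x \<in> ?W"
    have cx: "sc c x \<in> ?W" using T.subspace_scale[OF W_sub x] .
    show "eta N R smult p \<phi> (sc c x) = (\<lambda>m. c * eta N R smult p \<phi> x m)"
      using x cx phi_scale[OF phi mt_in_MW[OF x]]
      by (simp add: eta_def mt_sc_w fun_eq_iff)
  qed
  moreover have "\<forall>w\<in>?W. eta N R smult p \<phi> w \<in> Mdual smult"
  proof
    fix w assume w: "w \<in> ?W"
    have "lin_on smult (*) UNIV (\<lambda>m. \<phi> (mt smult m w))"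
      unfolding lin_on_def
      using phi_add[OF phi mt_in_MW[OF w] mt_in_MW[OF w]] phi_scale[OF phi mt_in_MW[OF w]]
      by (simp add: mt_add_m mt_smult_m)
    then show "eta N R smult p \<phi> w \<in> Mdual smult"
      using w by (simp add: eta_def Mdual_def)
  qed
  moreover have "\<forall>w. w \<notin> ?W \<longrightarrow> eta N R smult p \<phi> w = 0"
    by (simp add: eta_def)
  ultimately show ?thesis by (simp add: Kcoch_def)
qed

lemma eta_lin: "lin_on sc (\<lambda>c f w m. c * f w m) (Cdual N R smult p) (eta N R smult p)"
  unfolding lin_on_def
  by (auto simp: eta_def fun_eq_iff sc_def)

lemma eta_inj: "inj_on (eta N R smult p) (Cdual N R smult p)"
proof (rule inj_onI)
  fix \<phi>1 \<phi>2 assume p1: "\<phi>1 \<in> Cdual N R smult p" and p2: "\<phi>2 \<in> Cdual N R smult p"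
    and e: "eta N R smult p \<phi>1 = eta N R smult p \<phi>2"
  let ?W = "Wsp N R (nu N p)"
  have gen: "\<phi>1 (mt smult m w) = \<phi>2 (mt smult m w)" if w: "w \<in> ?W" for m w
  proof -
    have "eta N R smult p \<phi>1 w m = eta N R smult p \<phi>2 w m" using e by simp
    then show ?thesis using w by (simp add: eta_def)
  qed
  have onMW: "t \<in> MW N R smult (nu N p) \<and> \<phi>1 t = \<phi>2 t" if t: "t \<in> MW N R smult (nu N p)" for t
    using t
  proof (rule MW_induct)
    show "0 \<in> MW N R smult (nu N p) \<and> \<phi>1 0 = \<phi>2 0"
      using MW_0 phi_0[OF p1] phi_0[OF p2] by simp
  next
    fix c m w y assume w: "w \<in> ?W" and IH: "y \<in> MW N R smult (nu N p) \<and> \<phi>1 y = \<phi>2 y"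
    let ?x = "mt smult m w"
    have xM: "?x \<in> MW N R smult (nu N p)" using w mt_in_MW by simp
    have cxM: "msc smult c ?x \<in> MW N R smult (nu N p)" using MW_scale[OF xM] .
    have "\<phi>1 (msc smult c ?x + y) = \<phi>2 (msc smult c ?x + y)"
      using phi_add[OF p1 cxM] phi_add[OF p2 cxM] phi_scale[OF p1 xM] phi_scale[OF p2 xM]
        IH gen[OF w] by simp
    then show "msc smult c ?x + y \<in> MW N R smult (nu N p) \<and> \<phi>1 (msc smult c ?x + y) = \<phi>2 (msc smult c ?x + y)"
      using MW_add[OF cxM] IH by simp
  qed
  show "\<phi>1 = \<phi>2"
  proof
    fix t
    show "\<phi>1 t = \<phi>2 t"
    proof (cases "t \<in> MW N R smult (nu N p)")
      case True then show ?thesis using onMW by blast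
    next
      case False then show ?thesis using CdualD(2)[OF p1 False] CdualD(2)[OF p2 False] by simp
    qed
  qed
qed

lemma sum_sup_G:
  assumes "finite S" "fsupp t \<subseteq> S" "\<And>u. G u 0 = (0::'k)"
  shows "(\<Sum>u\<in>fsupp t. G u (t u)) = (\<Sum>u\<in>S. G u (t u))"
  by (rule sum.mono_neutral_left[OF assms(1,2)]) (auto simp: fsupp_def assms(3))

lemma eta_surj:
  assumes f: "f \<in> Kcoch N R smult p"
  shows "\<exists>\<phi>\<in>Cdual N R smult p. eta N R smult p \<phi> = f"
proof -
  let ?W = "Wsp N R (nu N p)"
  let ?n = "nu N p"
  have fl: "lin_on sc sc ?W f" and fM: "\<forall>w\<in>?W. f w \<in> Mdual smult"
    and f0: "\<forall>w. w \<notin> ?W \<longrightarrow> f w = 0"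
    using f by (auto simp: Kcoch_def sc_eq)
  have fadd: "\<And>x y. x \<in> ?W \<Longrightarrow> y \<in> ?W \<Longrightarrow> f (x + y) = f x + f y"
    using fl unfolding lin_on_def by blast
  have fsc: "\<And>c x. x \<in> ?W \<Longrightarrow> f (sc c x) = sc c (f x)"
    using fl unfolding lin_on_def by blast
  have fz: "f 0 = 0" using lin_on_0[OF fl T.subspace_0[OF W_sub]] .
  obtain B where B: "B \<subseteq> ?W" "T.independent B" "?W \<subseteq> T.span B"
    by (rule T.basis_exists)
  interpret VP: vector_space_pair "sc :: 'k \<Rightarrow> ('x list \<Rightarrow> 'k) \<Rightarrow> _" "sc :: 'k \<Rightarrow> ('m \<Rightarrow> 'k) \<Rightarrow> _"
    by (simp add: vector_space_pair_def vs_sc)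
  obtain g where g: "Vector_Spaces.linear sc sc g" "\<forall>x\<in>B. g x = f x" "range g = T.span (f ` B)"
    using VP.linear_independent_extend_subspace[OF B(2), of f] by blast
  have hom: "module_hom sc sc g" using g(1) by (simp add: module_hom_iff_linear)
  have gadd: "\<And>x y. g (x + y) = g x + g y" using g(1) by (simp add: Vector_Spaces.linear_iff)
  have gsc: "\<And>c x. g (sc c x) = sc c (g x)" using g(1) by (simp add: Vector_Spaces.linear_iff)
  have gz: "g 0 = 0" using gadd[of 0 0] by simp
  have gW: "\<forall>w\<in>?W. g w = f w"
  proof
    fix w assume w: "w \<in> ?W"
    then have "w \<in> T.span B" using B(3) by blast
    then have "w \<in> ?W \<and> g w = f w"
    proof (induction rule: T.span_induct_alt)
      case base
      show ?case
      proof (intro conjI)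
        show "0 \<in> ?W" by (rule T.subspace_0[OF W_sub])
        show "g 0 = f 0" using gz fz by (simp only:)
      qed
    next
      case (step c x y)
      have xW: "x \<in> ?W" using step.hyps B(1) by blast
      have cxW: "sc c x \<in> ?W" using T.subspace_scale[OF W_sub xW] .
      have "g (sc c x + y) = f (sc c x + y)"
        using gadd gsc fadd[OF cxW] fsc[OF xW] step.IH g(2) step.hyps by simp
      then show ?case using T.subspace_add[OF W_sub cxW] step.IH by blast
    qed
    then show "g w = f w" by blast
  qed
  have "T.span (f ` B) \<subseteq> Mdual smult"
    by (rule T.span_minimal[OF _ Mdual_sub]) (use fM B(1) in blast)
  then have gM: "\<And>x. g x \<in> Mdual smult" using g(3) by blast
  define G where "G u = g (single u 1)" for u
  have Gadd: "\<And>u a b. G u (a + b) = G u a + G u b"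
    using gM unfolding G_def Mdual_def lin_on_def by blast
  have Gsc: "\<And>u c a. G u (smult c a) = c * G u a"
    using gM unfolding G_def Mdual_def lin_on_def by blast
  have G0: "\<And>u. G u 0 = 0"
  proof -
    fix u
    have "G u 0 + G u 0 = G u 0 + 0" using Gadd[of u 0 0] by simp
    then show "G u 0 = 0" by (rule add_left_imp_eq)
  qed
  define \<phi> where "\<phi> t = (if t \<in> MW N R smult ?n then (\<Sum>u\<in>fsupp t. G u (t u)) else 0)" for t
  have phiC: "\<phi> \<in> Cdual N R smult p"
  proof -
    have "lin_on (msc smult) (*) (MW N R smult ?n) \<phi>"
      unfolding lin_on_def
    proof (intro conjI ballI allI)
      fix x y assume x: "x \<in> MW N R smult ?n" and y: "y \<in> MW N R smult ?n"
      let ?S = "fsupp x \<union> fsupp y"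
      have fS: "finite ?S" using MW_fin x y by blast
      have "(\<Sum>u\<in>fsupp (x + y). G u ((x + y) u)) = (\<Sum>u\<in>?S. G u ((x + y) u))"
        by (rule sum_sup_G[OF fS fsupp_add[of x y], of G]) (rule G0)
      also have "\<dots> = (\<Sum>u\<in>?S. G u (x u)) + (\<Sum>u\<in>?S. G u (y u))"
        by (simp add: Gadd sum.distrib)
      also have "\<dots> = (\<Sum>u\<in>fsupp x. G u (x u)) + (\<Sum>u\<in>fsupp y. G u (y u))"
      proof -
        have ex: "(\<Sum>u\<in>fsupp x. G u (x u)) = (\<Sum>u\<in>?S. G u (x u))"
          by (rule sum_sup_G[OF fS]) (auto intro: G0)
        have ey: "(\<Sum>u\<in>fsupp y. G u (y u)) = (\<Sum>u\<in>?S. G u (y u))"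
          by (rule sum_sup_G[OF fS]) (auto intro: G0)
        show ?thesis using ex ey by simp
      qed
      finally show "\<phi> (x + y) = \<phi> x + \<phi> y"
        using x y MW_add[OF x y] by (simp add: \<phi>_def)
    next
      fix c x assume x: "x \<in> MW N R smult ?n"
      have fS: "finite (fsupp x)" using MW_fin x by blast
      have s: "fsupp (msc smult c x) \<subseteq> fsupp x" by (auto simp: fsupp_def msc_def)
      have "(\<Sum>u\<in>fsupp (msc smult c x). G u (msc smult c x u)) = (\<Sum>u\<in>fsupp x. G u (msc smult c x u))"
        by (rule sum_sup_G[OF fS s]) (rule G0)
      also have "\<dots> = c * (\<Sum>u\<in>fsupp x. G u (x u))"
        by (simp add: msc_def Gsc sum_distrib_left)
      finally show "\<phi> (msc smult c x) = c * \<phi> x"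
        using x MW_scale[OF x] by (simp add: \<phi>_def)
    qed
    then show ?thesis by (simp add: Cdual_def \<phi>_def)
  qed
  have "eta N R smult p \<phi> = f"
  proof
    fix w
    show "eta N R smult p \<phi> w = f w"
    proof (cases "w \<in> ?W")
      case False then show ?thesis using f0 by (simp add: eta_def)
    next
      case True
      have fw: "finite (fsupp w)" using W_Tn[OF tsub] True by (auto simp: Tn_def)
      have gw: "g w = (\<Sum>u\<in>fsupp w. sc (w u) (G u))"
      proof -
        have "g w = g (\<Sum>u\<in>fsupp w. sc (w u) (single u 1))" using decomp[OF fw] by simp
        also have "\<dots> = (\<Sum>u\<in>fsupp w. sc (w u) (G u))"
          by (simp add: module_hom.sum[OF hom] gsc G_def)
        finally show ?thesis .
      qed
      show ?thesis
      proof
        fix m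
        have "eta N R smult p \<phi> w m = (\<Sum>u\<in>fsupp (mt smult m w). G u (smult (w u) m))"
          using True mt_in_MW[OF True] by (simp add: eta_def \<phi>_def mt_apply)
        also have "\<dots> = (\<Sum>u\<in>fsupp w. G u (smult (w u) m))"
          using sum_sup_G[OF fw fsupp_mt[of m w], of G] G0 by (simp add: mt_apply)
        also have "\<dots> = g w m"
          by (simp add: gw sum_app sc_def Gsc)
        also have "\<dots> = f w m" using gW True by simp
        finally show "eta N R smult p \<phi> w m = f w m" .
      qed
    qed
  qed
  then show ?thesis using phiC by blast
qed

lemma eta_bij: "bij_betw (eta N R smult p) (Cdual N R smult p) (Kcoch N R smult p)"
  unfolding bij_betw_def
  using eta_inj eta_Kcoch eta_surj by blast

end

lemma iso_abstract:
  fixes h :: "nat \<Rightarrow> 'a::zero \<Rightarrow> 'b::ab_group_add"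
  assumes bij: "\<And>p. bij_betw (h p) (X1 p) (X2 p)"
    and comm: "\<And>p \<phi>. \<phi> \<in> X1 p \<Longrightarrow> h (Suc p) (d1 p \<phi>) = d2 p (h p \<phi>)"
    and cl: "\<And>p \<phi>. \<phi> \<in> X1 p \<Longrightarrow> d1 p \<phi> \<in> X1 (Suc p)"
    and h0: "\<And>p. h p 0 = 0" and z1: "\<And>p. 0 \<in> X1 p" and z2: "\<And>p. 0 \<in> X2 p"
    and d20: "\<And>p. d2 p 0 = 0"
  shows "induces_iso (cocycles X1 d1 p) (coboundaries X1 d1 p) (cocycles X2 d2 p) (coboundaries X2 d2 p) (h p)"
  unfolding induces_iso_def
proof (intro conjI ballI subsetI)
  have inj: "\<And>p. inj_on (h p) (X1 p)" and img: "\<And>p. h p ` X1 p = X2 p"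
    using bij by (auto simp: bij_betw_def)
  have B2_0: "0 \<in> coboundaries X2 d2 p"
  proof (cases "p = 0")
    case False
    have "d2 (p - 1) 0 \<in> d2 (p - 1) ` X2 (p - 1)" using z2 by blast
    then show ?thesis using False d20 by (simp add: coboundaries_def)
  qed (simp add: coboundaries_def)
  {
    fix y assume "y \<in> h p ` cocycles X1 d1 p"
    then obtain z where z: "z \<in> X1 p" "d1 p z = 0" "y = h p z" by (auto simp: cocycles_def)
    have "h p z \<in> X2 p" using img z by blast
    moreover have "d2 p (h p z) = 0" using comm[OF z(1)] z(2) h0 by metis
    ultimately show "y \<in> cocycles X2 d2 p" using z by (simp add: cocycles_def)
  }
  {
    fix y assume y: "y \<in> h p ` coboundaries X1 d1 p"
    show "y \<in> coboundaries X2 d2 p"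
    proof (cases "p = 0")
      case True then show ?thesis using y h0 by (simp add: coboundaries_def)
    next
      case False
      then obtain q where q: "p = Suc q" by (cases p) auto
      from y False obtain x where x: "x \<in> X1 q" "y = h p (d1 q x)" by (auto simp: coboundaries_def q)
      have "y = d2 q (h q x)" using comm[OF x(1)] x q by simp
      moreover have "h q x \<in> X2 q" using img x by blast
      ultimately show ?thesis by (simp add: coboundaries_def q)
    qed
  }
  {
    fix z assume z: "z \<in> cocycles X1 d1 p"
    show "h p z \<in> coboundaries X2 d2 p \<longrightarrow> z \<in> coboundaries X1 d1 p"
    proof
      assume hz: "h p z \<in> coboundaries X2 d2 p"
      have zX: "z \<in> X1 p" using z by (simp add: cocycles_def)
      show "z \<in> coboundaries X1 d1 p"
      proof (cases "p = 0")
        case True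
        then have "h p z = h p 0" using hz h0 by (simp add: coboundaries_def)
        then have "z = 0" using inj_onD[OF inj _ zX z1] by blast
        then show ?thesis using True by (simp add: coboundaries_def)
      next
        case False
        then obtain q where q: "p = Suc q" by (cases p) auto
        from hz obtain y' where y': "y' \<in> X2 q" "h p z = d2 q y'" by (auto simp: coboundaries_def q)
        then obtain y where y: "y \<in> X1 q" "y' = h q y" using img by blast
        have "h p z = h p (d1 q y)" using comm[OF y(1)] y y' q by simp
        then have "z = d1 q y" using inj_onD[OF inj _ zX] cl[OF y(1)] q by blast
        then show ?thesis using y by (simp add: coboundaries_def q)
      qed
    qed
  }
  {
    fix z' assume z': "z' \<in> cocycles X2 d2 p"
    then have z'X: "z' \<in> X2 p" and dz: "d2 p z' = 0" by (auto simp: cocycles_def)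
    then obtain z where z: "z \<in> X1 p" "z' = h p z" using img by blast
    have "h (Suc p) (d1 p z) = h (Suc p) 0" using comm[OF z(1)] z dz h0 by simp
    then have "d1 p z = 0" using inj_onD[OF inj _ cl[OF z(1)] z1] by blast
    then have "z \<in> cocycles X1 d1 p" using z by (simp add: cocycles_def)
    moreover have "h p z - z' \<in> coboundaries X2 d2 p" using z B2_0 by simp
    ultimately show "\<exists>z\<in>cocycles X1 d1 p. h p z - z' \<in> coboundaries X2 d2 p" by blast
  }
qed

context BM
begin

lemma eta_0: "eta N R smult p 0 = 0"
proof (rule ext)
  fix w
  show "eta N R smult p 0 w = 0 w"
  proof (cases "w \<in> Wsp N R (nu N p)")
    case True
    show ?thesis by (rule ext) (simp add: eta_def True)
  qed (simp add: eta_def)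
qed

lemma Cdual_0: "0 \<in> Cdual N R smult p"
  by (simp add: Cdual_def lin_on_def)

lemma Kcoch_0: "0 \<in> Kcoch N R smult p"
proof -
  have z: "(\<lambda>m::'m. 0::'k) = 0" by (rule ext) simp
  show ?thesis by (simp add: Kcoch_def lin_on_def Mdual_def z)
qed

lemma dK_0: "dK N R lact ract p 0 = 0"
  by (auto simp: dK_def bK_cochain_def fun_eq_iff sum_app lword_dual rword_dual dual_lact_def dual_ract_def split_beta)

lemma B2_0: "0 \<in> coboundaries (Kcoch N R smult) (dK N R lact ract) p"
proof (cases "p = 0")
  case False
  have "dK N R lact ract (p - 1) 0 \<in> dK N R lact ract (p - 1) ` Kcoch N R smult (p - 1)"
    using Kcoch_0 by blast
  then show ?thesis using False dK_0 by (simp add: coboundaries_def)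
qed (simp add: coboundaries_def)

end

theorem proposition4p1:
  fixes N :: nat and R :: "('x list \<Rightarrow> 'k::field) set"
    and smult :: "'k \<Rightarrow> 'm::ab_group_add \<Rightarrow> 'm" and lact ract :: "'x \<Rightarrow> 'm \<Rightarrow> 'm"
    and smult' :: "'k \<Rightarrow> 'n::ab_group_add \<Rightarrow> 'n" and lact' ract' :: "'x \<Rightarrow> 'n \<Rightarrow> 'n"
  assumes "N \<ge> 2" and "tsubspace N R"
    and "bimod N R smult lact ract" and "bimod N R smult' lact' ract'"
  shows
    "(\<forall>p. bij_betw (eta N R smult p) (Cdual N R smult p) (Kcoch N R smult p)
         \<and> lin_on sc (\<lambda>c f w m. c * f w m) (Cdual N R smult p) (eta N R smult p)
         \<and> (\<forall>\<phi>\<in>Cdual N R smult p.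
              eta N R smult (Suc p) (dC N R smult lact ract p \<phi>)
              = dK N R lact ract p (eta N R smult p \<phi>)))
     \<and> (\<forall>p. induces_iso
            (cocycles (Cdual N R smult) (dC N R smult lact ract) p)
            (coboundaries (Cdual N R smult) (dC N R smult lact ract) p)
            (cocycles (Kcoch N R smult) (dK N R lact ract) p)
            (coboundaries (Kcoch N R smult) (dK N R lact ract) p)
            (eta N R smult p))
     \<and> (\<forall>g. bimod_hom smult lact ract smult' lact' ract' g \<longrightarrow>
          (\<forall>p. \<forall>z\<in>cocycles (Cdual N R smult') (dC N R smult' lact' ract') p.
             eta N R smult p (pullC N R smult p g z) - pushK g (eta N R smult' p z)
               \<in> coboundaries (Kcoch N R smult) (dK N R lact ract) p))"
proof -
  interpret BM N R smult lact ract
    using assms by (simp add: BM_def)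
  have P1: "\<forall>p. bij_betw (eta N R smult p) (Cdual N R smult p) (Kcoch N R smult p)
         \<and> lin_on sc (\<lambda>c f w m. c * f w m) (Cdual N R smult p) (eta N R smult p)
         \<and> (\<forall>\<phi>\<in>Cdual N R smult p.
              eta N R smult (Suc p) (dC N R smult lact ract p \<phi>)
              = dK N R lact ract p (eta N R smult p \<phi>))"
    using eta_bij eta_lin compat by blast
  have P2: "\<forall>p. induces_iso
            (cocycles (Cdual N R smult) (dC N R smult lact ract) p)
            (coboundaries (Cdual N R smult) (dC N R smult lact ract) p)
            (cocycles (Kcoch N R smult) (dK N R lact ract) p)
            (coboundaries (Kcoch N R smult) (dK N R lact ract) p)
            (eta N R smult p)"
    by (intro allI iso_abstract eta_bij compat dC_Cdual eta_0 Cdual_0 Kcoch_0 dK_0)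
  have P3: "\<forall>g. bimod_hom smult lact ract smult' lact' ract' g \<longrightarrow>
          (\<forall>p. \<forall>z\<in>cocycles (Cdual N R smult') (dC N R smult' lact' ract') p.
             eta N R smult p (pullC N R smult p g z) - pushK g (eta N R smult' p z)
               \<in> coboundaries (Kcoch N R smult) (dK N R lact ract) p)"
  proof (intro allI impI ballI)
    fix g p z
    assume g: "bimod_hom smult lact ract smult' lact' ract' g"
    have gs: "\<And>c m. g (smult c m) = smult' c (g m)"
      using g unfolding bimod_hom_def lin_on_def by blast
    have "eta N R smult p (pullC N R smult p g z) = pushK g (eta N R smult' p z)"
    proof (rule ext)
      fix w
      show "eta N R smult p (pullC N R smult p g z) w = pushK g (eta N R smult' p z) w"
      proof (cases "w \<in> Wsp N R (nu N p)")
        case True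
        have gm: "g \<circ> mt smult m w = mt smult' (g m) w" for m
          by (simp add: fun_eq_iff mt_def gs)
        show ?thesis using True mt_in_MW[OF True]
          by (simp add: eta_def pullC_def pushK_def gm comp_def[symmetric]) (simp add: comp_def)
      next
        case False then show ?thesis by (simp add: eta_def pushK_def fun_eq_iff)
      qed
    qed
    then show "eta N R smult p (pullC N R smult p g z) - pushK g (eta N R smult' p z)
               \<in> coboundaries (Kcoch N R smult) (dK N R lact ract) p"
      using B2_0 by simp
  qed
  show ?thesis using P1 P2 P3 by blast
qed

end
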